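(* Let $L\subseteq\Sigma^*$ be a regular closed language with $\kappa(L)=n$ and $L\notin\{\emptyset,\Sigma^*\}$, such that the eight languages $L$, $L^-$, $L^{-*}=L^-\cup\{\epsilon\}$, $L^{-*-}=L\setminus\{\epsilon\}$, $L^*$, $L^{*-}$, $L^{*-*}=L^{*-}\cup\{\epsilon\}$, $L^{*-*-}=L^*\setminus\{\epsilon\}$ are pairwise distinct (in particular $L\ne L^*$). Then: - $\kappa(L)=\kappa(L^-)=n$; - $\kappa(L^* )=\kappa(L^{*-})\le f(n)$; - $\kappa(L^{*-*})=\kappa(L^{*-*-})\le f(n)+1$; - $\kappa(L^{-*})=\kappa(L^{-*-})\le n+1$. Here $f(n)=2^{n-2}+1$ if $L$ is prefix-closed, $f(n)=n-1$ if $L$ is suffix-closed, and $f(n)=2$ if $L$ is factor-closed or subword-closed. Moreover, for each of the classes prefix-closed, suffix-closed and subword-closed (hence also factor-closed), and every sufficiently large $n$ (e.g. $n\ge 4$), there exists a language $L$ of that class with $\kappa(L)=n$ attaining all these bounds simultaneously.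
   Context: $\Sigma$ is a finite non-empty alphabet. $\kappa(L)$ is the number of distinct left quotients $L_w=\{x\mid wx\in L\}$ of $L$ (its state complexity). $L^-=\Sigma^*\setminus L$ is complement and $L^*$ is Kleene star; superscript strings such as $L^{*-*}$ denote successive application of the operations from left to right. A language is prefix-closed (suffix-, factor-, subword-closed) if it contains every prefix (suffix, factor, subword) of each of its words, where subword means scattered subsequence. "Closed" means any of these four. *)

theory Defs
  imports Main "HOL-Library.Sublist"
begin

text \<open>Languages over an explicit finite alphabet Sigma are sets of words in lists Sigma.\<close>

definition compl_lang :: "'a set \<Rightarrow> 'a list set \<Rightarrow> 'a list set" where
  "compl_lang \<Sigma> L = lists \<Sigma> - L"

definition kstar :: "'a list set \<Rightarrow> 'a list set" where
  "kstar L = {concat ws | ws. set ws \<subseteq> L}"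

definition lquot :: "'a list \<Rightarrow> 'a list set \<Rightarrow> 'a list set" where
  "lquot w L = {x. w @ x \<in> L}"

text \<open>State complexity: number of distinct left quotients by words over Sigma.\<close>
definition sc :: "'a set \<Rightarrow> 'a list set \<Rightarrow> nat" where
  "sc \<Sigma> L = card ((\<lambda>w. lquot w L) ` lists \<Sigma>)"

definition regular_lang :: "'a set \<Rightarrow> 'a list set \<Rightarrow> bool" where
  "regular_lang \<Sigma> L \<longleftrightarrow> (\<exists>(Q::nat set) \<delta> q0 F. finite Q \<and> q0 \<in> Q \<and>
      (\<forall>q\<in>Q. \<forall>a\<in>\<Sigma>. \<delta> q a \<in> Q) \<and> F \<subseteq> Q \<and>
      L = {w \<in> lists \<Sigma>. fold (\<lambda>a q. \<delta> q a) w q0 \<in> F})"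

definition prefix_closed :: "'a list set \<Rightarrow> bool" where
  "prefix_closed L \<longleftrightarrow> (\<forall>w\<in>L. \<forall>u. prefix u w \<longrightarrow> u \<in> L)"

definition suffix_closed :: "'a list set \<Rightarrow> bool" where
  "suffix_closed L \<longleftrightarrow> (\<forall>w\<in>L. \<forall>u. suffix u w \<longrightarrow> u \<in> L)"

definition factor_closed :: "'a list set \<Rightarrow> bool" where
  "factor_closed L \<longleftrightarrow> (\<forall>w\<in>L. \<forall>u. sublist u w \<longrightarrow> u \<in> L)"

definition subword_closed :: "'a list set \<Rightarrow> bool" where
  "subword_closed L \<longleftrightarrow> (\<forall>w\<in>L. \<forall>u. subseq u w \<longrightarrow> u \<in> L)"

definition closed_lang :: "'a list set \<Rightarrow> bool" where
  "closed_lang L \<longleftrightarrow> prefix_closed L \<or> suffix_closed L \<or> factor_closed L \<or> subword_closed L"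

text \<open>The eight languages L, L^-, L^{-*}, L^{-*-}, L^*, L^{*-}, L^{*-*}, L^{*-*-}.\<close>
definition eight_langs :: "'a set \<Rightarrow> 'a list set \<Rightarrow> 'a list set list" where
  "eight_langs \<Sigma> L =
    [L, compl_lang \<Sigma> L, kstar (compl_lang \<Sigma> L), compl_lang \<Sigma> (kstar (compl_lang \<Sigma> L)),
     kstar L, compl_lang \<Sigma> (kstar L), kstar (compl_lang \<Sigma> (kstar L)),
     compl_lang \<Sigma> (kstar (compl_lang \<Sigma> (kstar L)))]"

definition hyp :: "'a set \<Rightarrow> 'a list set \<Rightarrow> bool" where
  "hyp \<Sigma> L \<longleftrightarrow> finite \<Sigma> \<and> \<Sigma> \<noteq> {} \<and> L \<subseteq> lists \<Sigma> \<and> regular_lang \<Sigma> L \<and> closed_lang L \<and>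
     L \<noteq> {} \<and> L \<noteq> lists \<Sigma> \<and> distinct (eight_langs \<Sigma> L)"

end

theory Submission
  imports Defs
begin

definition lconc :: "'a list set \<Rightarrow> 'a list set \<Rightarrow> 'a list set" where
  "lconc A B = {x @ y | x y. x \<in> A \<and> y \<in> B}"

lemma lquot_Nil[simp]: "lquot [] X = X" by (simp add: lquot_def)
lemma lquot_append: "lquot (u @ v) X = lquot v (lquot u X)" by (simp add: lquot_def)
lemma lquot_empty[simp]: "lquot w {} = {}" by (simp add: lquot_def)

lemma lquot_lconc: "lquot [a] (lconc A B) = lconc (lquot [a] A) B \<union> (if [] \<in> A then lquot [a] B else {})"
  unfolding lquot_def lconc_def
  by (auto simp: Cons_eq_append_conv split: if_splits)

lemma lconc_Un1: "lconc (A \<union> B) C = lconc A C \<union> lconc B C" by (auto simp: lconc_def)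
lemma lconc_UN: "lconc (\<Union>i\<in>I. A i) C = (\<Union>i\<in>I. lconc (A i) C)" by (auto simp: lconc_def)
lemma lconc_empty[simp]: "lconc {} B = {}" by (auto simp: lconc_def)
lemma lconc_Nil_sub: "[] \<in> A \<Longrightarrow> B \<subseteq> lconc A B" by (force simp: lconc_def)
lemma lconc_mono: "A \<subseteq> A' \<Longrightarrow> lconc A B \<subseteq> lconc A' B" by (auto simp: lconc_def)
lemma lconc_memI: "x \<in> A \<Longrightarrow> y \<in> B \<Longrightarrow> x @ y \<in> lconc A B" by (auto simp: lconc_def)

lemma kstar_Nil[simp]: "[] \<in> kstar L"
  unfolding kstar_def by (rule CollectI, rule exI[of _ "[]"]) auto

lemma kstar_sub: "L \<subseteq> kstar L"
  unfolding kstar_def by (auto intro!: exI[of _ "[_]"])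

lemma kstar_Cons: "x \<in> L \<Longrightarrow> y \<in> kstar L \<Longrightarrow> x @ y \<in> kstar L"
proof -
  assume "x \<in> L" "y \<in> kstar L"
  then obtain ws where "y = concat ws" "set ws \<subseteq> L" by (auto simp: kstar_def)
  then show ?thesis using \<open>x \<in> L\<close> unfolding kstar_def by (auto intro!: exI[of _ "x # ws"])
qed

lemma lconc_kstar_sub: "lconc L (kstar L) \<subseteq> kstar L"
  by (auto simp: lconc_def kstar_Cons)

lemma lconc_kstar_eq: "[] \<in> L \<Longrightarrow> lconc L (kstar L) = kstar L"
  using lconc_kstar_sub lconc_Nil_sub by blast

lemma kstar_lists: "L \<subseteq> lists S \<Longrightarrow> kstar L \<subseteq> lists S"
  unfolding kstar_def by fastforce

lemma kstar_induct_aux: "set ws \<subseteq> L \<Longrightarrow> P [] \<Longrightarrow> (\<And>x y. x \<in> L \<Longrightarrow> P y \<Longrightarrow> P (x @ y)) \<Longrightarrow> P (concat ws)"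
  by (induction ws) auto

lemma lquot_kstar: "lquot [a] (kstar L) = lconc (lquot [a] L) (kstar L)"
proof
  show "lquot [a] (kstar L) \<subseteq> lconc (lquot [a] L) (kstar L)"
  proof
    fix x assume "x \<in> lquot [a] (kstar L)"
    then obtain ws where ws: "a # x = concat ws" "set ws \<subseteq> L" by (auto simp: lquot_def kstar_def)
    have "\<And>x. a # x = concat ws \<Longrightarrow> set ws \<subseteq> L \<Longrightarrow> x \<in> lconc (lquot [a] L) (kstar L)"
    proof (induction ws)
      case Nil then show ?case by simp
    next
      case (Cons w ws)
      show ?case
      proof (cases w)
        case Nil then show ?thesis using Cons by auto
      next
        case (Cons b w')
        with Cons.prems have "b = a" "x = w' @ concat ws" by auto
        moreover have "concat ws \<in> kstar L" using Cons.prems unfolding kstar_def by auto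
        moreover have "w' \<in> lquot [a] L" using Cons.prems \<open>w = b # w'\<close> \<open>b = a\<close> by (auto simp: lquot_def)
        ultimately show ?thesis by (auto intro: lconc_memI)
      qed
    qed
    then show "x \<in> lconc (lquot [a] L) (kstar L)" using ws by blast
  qed
next
  show "lconc (lquot [a] L) (kstar L) \<subseteq> lquot [a] (kstar L)"
    by (auto simp: lconc_def lquot_def intro: kstar_Cons[where x="a # _", simplified])
qed

lemma single_kstar: "[c] \<in> kstar L \<longleftrightarrow> [c] \<in> L"
proof
  assume "[c] \<in> kstar L"
  then have "[c] \<in> lquot [] (kstar L)" by simp
  have "[] \<in> lquot [c] (kstar L)" using \<open>[c] \<in> kstar L\<close> by (simp add: lquot_def)
  then obtain x y where "[] = x @ y" "x \<in> lquot [c] L" by (auto simp: lquot_kstar lconc_def)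
  then show "[c] \<in> L" by (simp add: lquot_def)
qed (use kstar_sub in blast)

lemma single_lconc: "[c] \<in> lconc A B \<longleftrightarrow> ([] \<in> A \<and> [c] \<in> B) \<or> ([c] \<in> A \<and> [] \<in> B)"
  by (auto simp: lconc_def append_eq_Cons_conv Cons_eq_append_conv intro: exI[of _ "[]"])


abbreviation QS where "QS \<Sigma> X \<equiv> (\<lambda>w. lquot w X) ` lists \<Sigma>"

lemma fam_closed:
  assumes "X \<in> F" "\<And>Y a. Y \<in> F \<Longrightarrow> a \<in> \<Sigma> \<Longrightarrow> lquot [a] Y \<in> F"
  shows "w \<in> lists \<Sigma> \<Longrightarrow> lquot w X \<in> F"
proof (induction w rule: rev_induct)
  case Nil then show ?case using assms by simp
next
  case (snoc a w) then show ?case using assms by (simp add: lquot_append)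
qed

lemma fam_le:
  assumes "X \<in> F" "\<And>Y a. Y \<in> F \<Longrightarrow> a \<in> \<Sigma> \<Longrightarrow> lquot [a] Y \<in> F" "finite F"
  shows "sc \<Sigma> X \<le> card F" "finite (QS \<Sigma> X)"
proof -
  have "QS \<Sigma> X \<subseteq> F" using fam_closed[OF assms(1,2)] by blast
  then show "sc \<Sigma> X \<le> card F" "finite (QS \<Sigma> X)" unfolding sc_def using assms(3)
    by (auto intro: card_mono finite_subset)
qed

lemma fam_eq:
  assumes "X \<in> F" "\<And>Y a. Y \<in> F \<Longrightarrow> a \<in> \<Sigma> \<Longrightarrow> lquot [a] Y \<in> F"
    "\<And>Y. Y \<in> F \<Longrightarrow> \<exists>w\<in>lists \<Sigma>. lquot w X = Y"
  shows "sc \<Sigma> X = card F" "QS \<Sigma> X = F"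
proof -
  have "QS \<Sigma> X \<subseteq> F" using fam_closed[OF assms(1,2)] by blast
  moreover have "F \<subseteq> QS \<Sigma> X" using assms(3) by force
  ultimately show "QS \<Sigma> X = F" by blast
  then show "sc \<Sigma> X = card F" by (simp add: sc_def)
qed

lemma lquot_lists: "X \<subseteq> lists \<Sigma> \<Longrightarrow> lquot w X \<subseteq> lists \<Sigma>"
  by (auto simp: lquot_def)

lemma lquot_compl: "X \<subseteq> lists \<Sigma> \<Longrightarrow> w \<in> lists \<Sigma> \<Longrightarrow> lquot w (compl_lang \<Sigma> X) = lists \<Sigma> - lquot w X"
  by (auto simp: lquot_def compl_lang_def)

lemma QS_compl: "X \<subseteq> lists \<Sigma> \<Longrightarrow> QS \<Sigma> (compl_lang \<Sigma> X) = (\<lambda>Y. lists \<Sigma> - Y) ` QS \<Sigma> X"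
  by (auto simp: lquot_compl image_image)

lemma inj_compl: "inj_on (\<lambda>Y. lists \<Sigma> - Y) {Y. Y \<subseteq> lists \<Sigma>}"
  by (auto simp: inj_on_def)

lemma sc_compl: assumes "X \<subseteq> lists \<Sigma>" shows "sc \<Sigma> (compl_lang \<Sigma> X) = sc \<Sigma> X"
proof -
  have "inj_on (\<lambda>Y. lists \<Sigma> - Y) (QS \<Sigma> X)"
    by (rule inj_on_subset[OF inj_compl]) (use lquot_lists[OF assms] in auto)
  then show ?thesis unfolding sc_def QS_compl[OF assms] by (simp add: card_image)
qed

lemma compl_lists: "compl_lang \<Sigma> X \<subseteq> lists \<Sigma>" by (auto simp: compl_lang_def)

lemma pc_Nil: "prefix_closed L \<Longrightarrow> L \<noteq> {} \<Longrightarrow> [] \<in> L"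
  unfolding prefix_closed_def by auto
lemma sfc_Nil: "suffix_closed L \<Longrightarrow> L \<noteq> {} \<Longrightarrow> [] \<in> L"
  unfolding suffix_closed_def by auto

lemma closed_ps: "closed_lang L \<Longrightarrow> prefix_closed L \<or> suffix_closed L"
  unfolding closed_lang_def prefix_closed_def suffix_closed_def factor_closed_def subword_closed_def
  using prefix_imp_sublist prefix_imp_subseq by blast

lemma kstar_prefix: assumes "prefix_closed L" shows "prefix_closed (kstar L)"
  unfolding prefix_closed_def
proof (intro ballI allI impI)
  fix w u assume "w \<in> kstar L" "prefix u w"
  then obtain ws where ws: "w = concat ws" "set ws \<subseteq> L" by (auto simp: kstar_def)
  have "\<And>u. prefix u (concat ws) \<Longrightarrow> u \<in> kstar L" using ws(2)
  proof (induction ws)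
    case Nil then show ?case by simp
  next
    case (Cons x ws)
    from Cons.prems(1) have "prefix u x \<or> (\<exists>r. u = x @ r \<and> prefix r (concat ws))"
      by (simp add: prefix_append)
    then show ?case
    proof
      assume "prefix u x" then have "u \<in> L" using assms Cons.prems unfolding prefix_closed_def by auto
      then show ?thesis using kstar_sub by blast
    next
      assume "\<exists>r. u = x @ r \<and> prefix r (concat ws)"
      then obtain r where "u = x @ r" "prefix r (concat ws)" by blast
      then show ?thesis using Cons kstar_Cons by auto
    qed
  qed
  then show "u \<in> kstar L" using ws \<open>prefix u w\<close> by blast
qed

lemma kstar_suffix: assumes "suffix_closed L" shows "suffix_closed (kstar L)"
  unfolding suffix_closed_def
proof (intro ballI allI impI)
  fix w u assume "w \<in> kstar L" "suffix u w"
  then obtain ws where ws: "w = concat ws" "set ws \<subseteq> L" by (auto simp: kstar_def)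
  have "\<And>u. suffix u (concat ws) \<Longrightarrow> u \<in> kstar L" using ws(2)
  proof (induction ws)
    case Nil then show ?case by simp
  next
    case (Cons x ws)
    from Cons.prems(1) have "suffix u (concat ws) \<or> (\<exists>r. u = r @ concat ws \<and> suffix r x)"
      by (simp add: suffix_append)
    then show ?case
    proof
      assume "suffix u (concat ws)" then show ?thesis using Cons by auto
    next
      assume "\<exists>r. u = r @ concat ws \<and> suffix r x"
      then obtain r where "u = r @ concat ws" "suffix r x" by blast
      moreover have "r \<in> L" using assms Cons.prems \<open>suffix r x\<close> unfolding suffix_closed_def by auto
      moreover have "concat ws \<in> kstar L" using Cons.prems unfolding kstar_def by auto
      ultimately show ?thesis using kstar_Cons by auto
    qed
  qed
  then show "u \<in> kstar L" using ws \<open>suffix u w\<close> by blast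
qed

lemma kstar_compl:
  assumes "M \<subseteq> lists \<Sigma>" "[] \<in> M" "prefix_closed M \<or> suffix_closed M"
  shows "kstar (compl_lang \<Sigma> M) = compl_lang \<Sigma> M \<union> {[]}"
proof
  show "compl_lang \<Sigma> M \<union> {[]} \<subseteq> kstar (compl_lang \<Sigma> M)" using kstar_sub by auto
  show "kstar (compl_lang \<Sigma> M) \<subseteq> compl_lang \<Sigma> M \<union> {[]}"
  proof
    fix w assume "w \<in> kstar (compl_lang \<Sigma> M)"
    then obtain ws where ws: "w = concat ws" "set ws \<subseteq> compl_lang \<Sigma> M" by (auto simp: kstar_def)
    show "w \<in> compl_lang \<Sigma> M \<union> {[]}"
    proof (cases ws)
      case Nil then show ?thesis using ws by simp
    next
      case (Cons x ws')
      have wl: "w \<in> lists \<Sigma>" using ws compl_lists by fastforce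
      have "w \<notin> M"
      proof
        assume "w \<in> M"
        from assms(3) show False
        proof
          assume "prefix_closed M"
          moreover have "prefix x w" using ws Cons by simp
          ultimately have "x \<in> M" using \<open>w \<in> M\<close> unfolding prefix_closed_def by blast
          then show False using ws Cons by (auto simp: compl_lang_def)
        next
          assume "suffix_closed M"
          obtain ys y where "ws = ys @ [y]" using Cons by (metis list.distinct(1) rev_exhaust)
          moreover then have "suffix y w" using ws unfolding suffix_def by auto
          ultimately have "y \<in> M" using \<open>w \<in> M\<close> \<open>suffix_closed M\<close> unfolding suffix_closed_def by blast
          then show False using ws \<open>ws = ys @ [y]\<close> by (auto simp: compl_lang_def)
        qed
      qed
      then show ?thesis using wl by (simp add: compl_lang_def)
    qed
  qed
qed

lemma QS_kstar_compl:
  assumes "M \<subseteq> lists \<Sigma>" "[] \<in> M" "prefix_closed M \<or> suffix_closed M"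
  shows "QS \<Sigma> (kstar (compl_lang \<Sigma> M)) =
    insert (compl_lang \<Sigma> M \<union> {[]}) ((\<lambda>w. lists \<Sigma> - lquot w M) ` (lists \<Sigma> - {[]}))"
proof -
  have e: "lquot w (compl_lang \<Sigma> M \<union> {[]}) = lists \<Sigma> - lquot w M" if "w \<in> lists \<Sigma>" "w \<noteq> []" for w
    using that lquot_compl[OF assms(1) that(1)] by (auto simp: lquot_def)
  show ?thesis unfolding kstar_compl[OF assms]
  proof (intro equalityI subsetI)
    fix Y assume "Y \<in> QS \<Sigma> (compl_lang \<Sigma> M \<union> {[]})"
    then obtain w where "w \<in> lists \<Sigma>" "Y = lquot w (compl_lang \<Sigma> M \<union> {[]})" by blast
    then show "Y \<in> insert (compl_lang \<Sigma> M \<union> {[]}) ((\<lambda>w. lists \<Sigma> - lquot w M) ` (lists \<Sigma> - {[]}))"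
      using e by (cases "w = []") auto
  next
    fix Y assume "Y \<in> insert (compl_lang \<Sigma> M \<union> {[]}) ((\<lambda>w. lists \<Sigma> - lquot w M) ` (lists \<Sigma> - {[]}))"
    then show "Y \<in> QS \<Sigma> (compl_lang \<Sigma> M \<union> {[]})"
    proof
      assume "Y = compl_lang \<Sigma> M \<union> {[]}"
      then show ?thesis by (metis imageI lists.Nil lquot_Nil)
    next
      assume "Y \<in> (\<lambda>w. lists \<Sigma> - lquot w M) ` (lists \<Sigma> - {[]})"
      then obtain w where "w \<in> lists \<Sigma>" "w \<noteq> []" "Y = lists \<Sigma> - lquot w M" by blast
      then show ?thesis using e by (metis imageI)
    qed
  qed
qed

lemma sc_kstar_compl_le:
  assumes "M \<subseteq> lists \<Sigma>" "[] \<in> M" "prefix_closed M \<or> suffix_closed M" "finite (QS \<Sigma> M)"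
  shows "sc \<Sigma> (kstar (compl_lang \<Sigma> M)) \<le> sc \<Sigma> M + 1"
proof -
  have "card ((\<lambda>w. lists \<Sigma> - lquot w M) ` (lists \<Sigma> - {[]})) \<le> card ((\<lambda>w. lquot w M) ` (lists \<Sigma> - {[]}))"
  proof -
    have f: "finite ((\<lambda>w. lquot w M) ` (lists \<Sigma> - {[]}))"
      by (rule finite_subset[OF _ assms(4)]) blast
    have "(\<lambda>w. lists \<Sigma> - lquot w M) ` (lists \<Sigma> - {[]}) = (\<lambda>Y. lists \<Sigma> - Y) ` ((\<lambda>w. lquot w M) ` (lists \<Sigma> - {[]}))"
      by (simp add: image_image)
    then show ?thesis using card_image_le[OF f, of "\<lambda>Y. lists \<Sigma> - Y"] by simp
  qed
  also have "\<dots> \<le> sc \<Sigma> M" unfolding sc_def by (rule card_mono[OF assms(4)]) auto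
  finally have *: "card ((\<lambda>w. lists \<Sigma> - lquot w M) ` (lists \<Sigma> - {[]})) \<le> sc \<Sigma> M" .
  have "card (insert (compl_lang \<Sigma> M \<union> {[]}) ((\<lambda>w. lists \<Sigma> - lquot w M) ` (lists \<Sigma> - {[]})))
     \<le> Suc (card ((\<lambda>w. lists \<Sigma> - lquot w M) ` (lists \<Sigma> - {[]})))"
    by (cases "finite ((\<lambda>w. lists \<Sigma> - lquot w M) ` (lists \<Sigma> - {[]}))") (simp_all add: card_insert_if)
  then show ?thesis unfolding sc_def QS_kstar_compl[OF assms(1-3)] using * unfolding sc_def by linarith
qed

lemma sc_kstar_compl_eq:
  assumes "M \<subseteq> lists \<Sigma>" "[] \<in> M" "prefix_closed M \<or> suffix_closed M" "finite (QS \<Sigma> M)"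
    and reset: "w0 \<in> lists \<Sigma>" "w0 \<noteq> []" "lquot w0 M = M"
    and neq: "\<And>w. w \<in> lists \<Sigma> \<Longrightarrow> w \<noteq> [] \<Longrightarrow> lquot w M \<noteq> M - {[]}"
  shows "sc \<Sigma> (kstar (compl_lang \<Sigma> M)) = sc \<Sigma> M + 1"
proof -
  have A: "(\<lambda>w. lquot w M) ` (lists \<Sigma> - {[]}) = QS \<Sigma> M"
  proof (intro equalityI subsetI)
    fix Y assume "Y \<in> QS \<Sigma> M"
    then obtain w where "w \<in> lists \<Sigma>" "Y = lquot w M" by blast
    then show "Y \<in> (\<lambda>w. lquot w M) ` (lists \<Sigma> - {[]})"
      using reset by (cases "w = []") force+
  qed auto
  have B: "(\<lambda>w. lists \<Sigma> - lquot w M) ` (lists \<Sigma> - {[]}) = (\<lambda>Y. lists \<Sigma> - Y) ` QS \<Sigma> M"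
    using A by (metis image_image)
  have inj: "inj_on (\<lambda>Y. lists \<Sigma> - Y) (QS \<Sigma> M)"
    by (rule inj_on_subset[OF inj_compl]) (use lquot_lists[OF assms(1)] in auto)
  have notin: "compl_lang \<Sigma> M \<union> {[]} \<notin> (\<lambda>w. lists \<Sigma> - lquot w M) ` (lists \<Sigma> - {[]})"
  proof
    assume "compl_lang \<Sigma> M \<union> {[]} \<in> (\<lambda>w. lists \<Sigma> - lquot w M) ` (lists \<Sigma> - {[]})"
    then obtain w where w: "w \<in> lists \<Sigma>" "w \<noteq> []" "compl_lang \<Sigma> M \<union> {[]} = lists \<Sigma> - lquot w M" by blast
    have "lquot w M = M - {[]}"
    proof -
      have "lquot w M \<subseteq> lists \<Sigma>" using lquot_lists[OF assms(1)] .
      then show ?thesis using w(3) assms(1) assms(2) unfolding compl_lang_def by auto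
    qed
    then show False using neq w by blast
  qed
  have fin: "finite ((\<lambda>w. lists \<Sigma> - lquot w M) ` (lists \<Sigma> - {[]}))" using B assms(4) by simp
  show ?thesis unfolding sc_def QS_kstar_compl[OF assms(1-3)] card_insert_disjoint[OF fin notin]
    using B inj by (simp add: card_image)
qed

lemma prefix_quot: "prefix_closed M \<Longrightarrow> lquot w M \<noteq> {} \<Longrightarrow> [] \<in> lquot w M"
  unfolding prefix_closed_def lquot_def by auto

lemma prefix_neq:
  assumes "prefix_closed M" "x \<in> M" "x \<noteq> []"
  shows "lquot w M \<noteq> M - {[]}"
  using prefix_quot[OF assms(1), of w] assms by auto

lemma regular_finite:
  assumes "regular_lang \<Sigma> L" shows "finite (QS \<Sigma> L)"
proof -
  obtain Q :: "nat set" and \<delta> q0 F where A: "finite Q" "q0 \<in> Q" "\<forall>q\<in>Q. \<forall>a\<in>\<Sigma>. \<delta> q a \<in> Q" "F \<subseteq> Q"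
     "L = {w \<in> lists \<Sigma>. fold (\<lambda>a q. \<delta> q a) w q0 \<in> F}"
    using assms unfolding regular_lang_def by blast
  have inQ: "\<And>q. q \<in> Q \<Longrightarrow> fold (\<lambda>a q. \<delta> q a) w q \<in> Q" if "w \<in> lists \<Sigma>" for w
    using that by (induction w) (use A(3) in auto)
  have "QS \<Sigma> L \<subseteq> (\<lambda>q. {x \<in> lists \<Sigma>. fold (\<lambda>a q. \<delta> q a) x q \<in> F}) ` Q"
  proof
    fix Y assume "Y \<in> QS \<Sigma> L"
    then obtain w where w: "w \<in> lists \<Sigma>" "Y = lquot w L" by blast
    then have "Y = {x \<in> lists \<Sigma>. fold (\<lambda>a q. \<delta> q a) x (fold (\<lambda>a q. \<delta> q a) w q0) \<in> F}"
      unfolding A(5) lquot_def by auto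
    then show "Y \<in> (\<lambda>q. {x \<in> lists \<Sigma>. fold (\<lambda>a q. \<delta> q a) x q \<in> F}) ` Q" using inQ[OF w(1) A(2)] by blast
  qed
  then show ?thesis using A(1) finite_subset by blast
qed


lemma lconc_absorb: "[] \<in> q \<Longrightarrow> q \<subseteq> L \<Longrightarrow> [] \<in> L \<Longrightarrow> lconc q (kstar L) = kstar L"
  using lconc_Nil_sub[of q "kstar L"] lconc_mono[of q L "kstar L"] lconc_kstar_sub[of L] by blast

lemma quot_in_QS: "q \<in> QS \<Sigma> L \<Longrightarrow> a \<in> \<Sigma> \<Longrightarrow> lquot [a] q \<in> QS \<Sigma> L"
proof -
  assume "q \<in> QS \<Sigma> L" "a \<in> \<Sigma>"
  then obtain w where "w \<in> lists \<Sigma>" "q = lquot w L" by blast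
  moreover have "w @ [a] \<in> lists \<Sigma>" using \<open>w \<in> lists \<Sigma>\<close> \<open>a \<in> \<Sigma>\<close> by simp
  ultimately have "lquot [a] q = lquot (w @ [a]) L" by (simp add: lquot_append)
  then show ?thesis using \<open>w @ [a] \<in> lists \<Sigma>\<close> by blast
qed

lemma Nil_QS: "L \<in> QS \<Sigma> L" by (intro rev_image_eqI[of "[]"]) simp_all

lemma prefix_bound:
  assumes L: "L \<subseteq> lists \<Sigma>" "prefix_closed L" "[] \<in> L" "L \<noteq> lists \<Sigma>" "finite (QS \<Sigma> L)"
  shows "sc \<Sigma> (kstar L) \<le> 2 ^ (sc \<Sigma> L - 2) + 1" "finite (QS \<Sigma> (kstar L))"
proof -
  define K where "K = kstar L"
  define Q0 where "Q0 = QS \<Sigma> L - {{}}"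
  define G where "G T = lconc (\<Union>T) K" for T
  define \<T> where "\<T> = {T. T \<subseteq> Q0 \<and> L \<in> T}"
  define F where "F = insert {} (G ` \<T>)"
  have e: "{} \<in> QS \<Sigma> L"
  proof -
    obtain w where "w \<in> lists \<Sigma>" "w \<notin> L" using L by blast
    then have "lquot w L = {}" using L(2) unfolding prefix_closed_def lquot_def by auto
    then show ?thesis using \<open>w \<in> lists \<Sigma>\<close> by (intro rev_image_eqI[of w]) simp_all
  qed
  have LQ0: "L \<in> Q0" using L(3) Nil_QS unfolding Q0_def by auto
  have fQ0: "finite Q0" using L(5) unfolding Q0_def by auto
  have cQ0: "card Q0 = sc \<Sigma> L - 1" using e L(5) unfolding Q0_def sc_def by (simp add: card_Diff_singleton)
  have KF: "K \<in> F"
  proof -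
    have "G {L} = K" unfolding G_def K_def using lconc_kstar_eq[OF L(3)] by simp
    moreover have "{L} \<in> \<T>" using LQ0 unfolding \<T>_def by auto
    ultimately show ?thesis unfolding F_def by blast
  qed
  have clos: "lquot [a] Y \<in> F" if "Y \<in> F" "a \<in> \<Sigma>" for Y a
  proof (cases "Y = {}")
    case True then show ?thesis unfolding F_def by simp
  next
    case False
    have "Y \<in> G ` \<T>" using that(1) False unfolding F_def by blast
    then obtain T where "T \<in> \<T>" "Y = G T" by blast
    then have T: "T \<subseteq> Q0" "L \<in> T" "Y = G T" unfolding \<T>_def by auto
    define U where "U = (\<lambda>q. lquot [a] q) ` T"
    have UQ: "U \<subseteq> QS \<Sigma> L" using T(1) quot_in_QS[OF _ that(2)] unfolding U_def Q0_def by blast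
    have "lquot [a] Y = lconc (lquot [a] (\<Union>T)) K \<union> lquot [a] K"
      using T(2,3) L(3) unfolding G_def by (auto simp: lquot_lconc)
    also have "lquot [a] K = lconc (lquot [a] L) K" unfolding K_def by (rule lquot_kstar)
    also have "lquot [a] (\<Union>T) = \<Union>U" unfolding U_def lquot_def by auto
    also have "lconc (\<Union>U) K \<union> lconc (lquot [a] L) K = lconc (\<Union>U) K"
      using T(2) unfolding U_def lconc_def by blast
    finally have Y: "lquot [a] Y = lconc (\<Union>U) K" .
    show ?thesis
    proof (cases "\<Union>U = {}")
      case True
      have "lquot [a] Y = {}" unfolding Y True by simp
      then show ?thesis unfolding F_def by simp
    next
      case False
      then obtain q where q: "q \<in> U" "q \<noteq> {}" by blast
      from q(1) UQ obtain w where "q = lquot w L" by blast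
      then have "[] \<in> q" using q(2) prefix_quot[OF L(2)] by simp
      define T' where "T' = insert L (U - {{}})"
      have "T' \<subseteq> Q0" using UQ LQ0 unfolding T'_def Q0_def by blast
      then have "T' \<in> \<T>" unfolding \<T>_def T'_def by blast
      have "lconc (\<Union>T') K = lconc L K \<union> lconc (\<Union>U) K"
        unfolding T'_def lconc_def by blast
      also have "lconc L K = K" unfolding K_def by (rule lconc_kstar_eq[OF L(3)])
      also have "K \<subseteq> lconc (\<Union>U) K" using \<open>[] \<in> q\<close> q(1) by (intro lconc_Nil_sub) blast
      then have "K \<union> lconc (\<Union>U) K = lconc (\<Union>U) K" by blast
      finally show ?thesis using Y \<open>T' \<in> \<T>\<close> unfolding F_def G_def by auto
    qed
  qed
  have T_eq: "\<T> = insert L ` Pow (Q0 - {L})"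
  proof (intro equalityI subsetI)
    fix T assume "T \<in> \<T>"
    then have "T = insert L (T - {L})" "T - {L} \<in> Pow (Q0 - {L})" unfolding \<T>_def by auto
    then show "T \<in> insert L ` Pow (Q0 - {L})" by blast
  qed (use LQ0 in \<open>auto simp: \<T>_def\<close>)
  have "card \<T> = 2 ^ (sc \<Sigma> L - 2)"
  proof -
    have "inj_on (insert L) (Pow (Q0 - {L}))" unfolding inj_on_def by blast
    then have "card \<T> = card (Pow (Q0 - {L}))" unfolding T_eq by (rule card_image)
    also have "\<dots> = 2 ^ card (Q0 - {L})" using fQ0 by (simp add: card_Pow)
    also have "card (Q0 - {L}) = sc \<Sigma> L - 2" using cQ0 LQ0 fQ0 by (simp add: card_Diff_singleton)
    finally show ?thesis .
  qed
  have fT: "finite \<T>" unfolding T_eq using fQ0 by simp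
  have fF: "finite F" unfolding F_def using fT by simp
  have "card F \<le> Suc (card (G ` \<T>))" unfolding F_def by (simp add: card_insert_if fT)
  also have "card (G ` \<T>) \<le> card \<T>" using card_image_le[OF fT] .
  finally have "card F \<le> 2 ^ (sc \<Sigma> L - 2) + 1" using \<open>card \<T> = _\<close> by simp
  then show "sc \<Sigma> (kstar L) \<le> 2 ^ (sc \<Sigma> L - 2) + 1" "finite (QS \<Sigma> (kstar L))"
    using fam_le[of K F \<Sigma>, OF KF clos fF] unfolding K_def by auto
qed

lemma suffix_quot_sub: "suffix_closed L \<Longrightarrow> lquot w L \<subseteq> L"
  unfolding suffix_closed_def lquot_def by (auto intro: suffixI)

lemma suffix_bound:
  assumes L: "L \<subseteq> lists \<Sigma>" "suffix_closed L" "[] \<in> L" "finite (QS \<Sigma> L)" "kstar L \<noteq> L"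
  shows "sc \<Sigma> (kstar L) \<le> sc \<Sigma> L - 1" "finite (QS \<Sigma> (kstar L))"
proof -
  define K where "K = kstar L"
  define N where "N = {q \<in> QS \<Sigma> L. [] \<notin> q}"
  define F where "F = insert K ((\<lambda>q. lconc q K) ` N)"
  have dich: "lconc q K \<in> F" if "q \<in> QS \<Sigma> L" for q
  proof (cases "[] \<in> q")
    case True
    have "q \<subseteq> L" using that suffix_quot_sub[OF L(2)] by blast
    then have "lconc q K = K" unfolding K_def using lconc_absorb True L(3) by blast
    then show ?thesis unfolding F_def by simp
  next
    case False then show ?thesis using that unfolding F_def N_def by blast
  qed
  have KF: "K \<in> F" unfolding F_def by simp
  have clos: "lquot [a] Y \<in> F" if "Y \<in> F" "a \<in> \<Sigma>" for Y a
  proof -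
    from that(1) consider "Y = K" | q where "q \<in> N" "Y = lconc q K" unfolding F_def by blast
    then show ?thesis
    proof cases
      case 1
      then have "lquot [a] Y = lconc (lquot [a] L) K" unfolding K_def by (simp add: lquot_kstar)
      then show ?thesis using dich quot_in_QS[OF Nil_QS that(2)] by simp
    next
      case 2
      then have "lquot [a] Y = lconc (lquot [a] q) K" unfolding N_def by (simp add: lquot_lconc)
      then show ?thesis using dich quot_in_QS[OF _ that(2)] 2 unfolding N_def by simp
    qed
  qed
  have fN: "finite N" using L(4) unfolding N_def by simp
  have fF: "finite F" unfolding F_def using fN by simp
  obtain q2 where q2: "q2 \<in> QS \<Sigma> L" "[] \<in> q2" "q2 \<noteq> L"
  proof (rule ccontr)
    assume "\<not> thesis"
    then have H: "\<And>q. q \<in> QS \<Sigma> L \<Longrightarrow> [] \<in> q \<Longrightarrow> q = L" using that by blast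
    have "kstar L \<subseteq> L"
    proof
      fix w assume "w \<in> kstar L"
      then obtain ws where ws: "w = concat ws" "set ws \<subseteq> L" by (auto simp: kstar_def)
      have "set ws \<subseteq> L \<Longrightarrow> concat ws \<in> L"
      proof (induction ws)
        case Nil then show ?case using L(3) by simp
      next
        case (Cons x ws)
        then have "x \<in> L" "concat ws \<in> L" by auto
        have "x \<in> lists \<Sigma>" using \<open>x \<in> L\<close> L(1) by blast
        then have "lquot x L \<in> QS \<Sigma> L" by blast
        moreover have "[] \<in> lquot x L" using \<open>x \<in> L\<close> by (simp add: lquot_def)
        ultimately have "lquot x L = L" using H by blast
        then show ?case using \<open>concat ws \<in> L\<close> by (auto simp: lquot_def)
      qed
      then show "w \<in> L" using ws by simp
    qed
    then show False using L(5) kstar_sub by blast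
  qed
  have P: "{q \<in> QS \<Sigma> L. [] \<in> q} \<supseteq> {L, q2}" using q2 Nil_QS L(3) by blast
  have fP0: "finite {q \<in> QS \<Sigma> L. [] \<in> q}" using L(4) by simp
  have "card {L, q2} = 2" using q2(3) by simp
  then have c2: "card {q \<in> QS \<Sigma> L. [] \<in> q} \<ge> 2"
    using card_mono[OF fP0 P] by linarith
  have U: "QS \<Sigma> L = N \<union> {q \<in> QS \<Sigma> L. [] \<in> q}" unfolding N_def by blast
  have D: "N \<inter> {q \<in> QS \<Sigma> L. [] \<in> q} = {}" unfolding N_def by blast
  have fP: "finite {q \<in> QS \<Sigma> L. [] \<in> q}" using L(4) by simp
  have "card N + card {q \<in> QS \<Sigma> L. [] \<in> q} = sc \<Sigma> L"
    unfolding sc_def by (subst U) (rule card_Un_disjoint[OF fN fP D, symmetric])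
  then have cN: "card N + 2 \<le> sc \<Sigma> L" using c2 by linarith
  have "card F \<le> Suc (card ((\<lambda>q. lconc q K) ` N))" unfolding F_def by (simp add: card_insert_if fN)
  also have "card ((\<lambda>q. lconc q K) ` N) \<le> card N" using card_image_le[OF fN] .
  finally have "card F \<le> sc \<Sigma> L - 1" using cN by linarith
  then show "sc \<Sigma> (kstar L) \<le> sc \<Sigma> L - 1" "finite (QS \<Sigma> (kstar L))"
    using fam_le[of K F \<Sigma>, OF KF clos fF] unfolding K_def by auto
qed

lemma lquot_lists_eq: "lquot [a] (lists G) = (if a \<in> G then lists G else {})"
  by (auto simp: lquot_def)

lemma factor_bound:
  assumes L: "L \<subseteq> lists \<Sigma>" "factor_closed L"
  shows "sc \<Sigma> (kstar L) \<le> 2" "finite (QS \<Sigma> (kstar L))" "prefix_closed (kstar L)"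
proof -
  define G where "G = {a \<in> \<Sigma>. [a] \<in> L}"
  have "kstar L = lists G"
  proof
    show "kstar L \<subseteq> lists G"
    proof
      fix w assume "w \<in> kstar L"
      then obtain ws where ws: "w = concat ws" "set ws \<subseteq> L" by (auto simp: kstar_def)
      have "a \<in> G" if "a \<in> set w" for a
      proof -
        have "a \<in> set (concat ws)" using that ws(1) by simp
        then obtain x where x: "x \<in> set ws" "a \<in> set x" by auto
        then have "x \<in> L" using ws by auto
        moreover obtain p s where "x = p @ a # s" using split_list[OF x(2)] by blast
        then have "sublist [a] x" unfolding sublist_def by auto
        ultimately have "[a] \<in> L" using L(2) unfolding factor_closed_def by blast
        moreover have "a \<in> \<Sigma>" using \<open>x \<in> L\<close> L(1) x(2) by auto
        ultimately show ?thesis unfolding G_def by simp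
      qed
      then show "w \<in> lists G" by auto
    qed
  next
    show "lists G \<subseteq> kstar L"
    proof
      fix w assume "w \<in> lists G"
      then show "w \<in> kstar L"
      proof (induction w)
        case Nil then show ?case by simp
      next
        case (Cons a w) then show ?case using kstar_Cons[of "[a]" L w] unfolding G_def by auto
      qed
    qed
  qed
  moreover have "sc \<Sigma> (lists G) \<le> 2 \<and> finite (QS \<Sigma> (lists G))"
  proof -
    have cl: "\<And>Y a. Y \<in> {lists G, {}} \<Longrightarrow> a \<in> \<Sigma> \<Longrightarrow> lquot [a] Y \<in> {lists G, {}}"
      unfolding insert_iff empty_iff by (elim disjE) (simp_all add: lquot_lists_eq)
    have "card {lists G, {}} = 2" by (simp add: lists_eq_set[symmetric] card_insert_if) (use lists.Nil in blast)
    then show ?thesis using fam_le[of "lists G" "{lists G, {}}" \<Sigma>, OF _ cl] by auto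
  qed
  moreover have "prefix_closed (lists G)" unfolding prefix_closed_def prefix_def by auto
  ultimately show "sc \<Sigma> (kstar L) \<le> 2" "finite (QS \<Sigma> (kstar L))" "prefix_closed (kstar L)" by auto
qed


lemma part1:
  fixes \<Sigma> :: "'a set"
  assumes "hyp \<Sigma> L" "sc \<Sigma> L = n"
  shows "(let Lm = compl_lang \<Sigma> L; Lmst = kstar Lm; Lmstm = compl_lang \<Sigma> Lmst;
           Ls = kstar L; Lsm = compl_lang \<Sigma> Ls; Lsms = kstar Lsm; Lsmsm = compl_lang \<Sigma> Lsms
       in sc \<Sigma> Lm = n \<and>
          sc \<Sigma> Ls = sc \<Sigma> Lsm \<and>
          sc \<Sigma> Lsms = sc \<Sigma> Lsmsm \<and>
          sc \<Sigma> Lmst = sc \<Sigma> Lmstm \<and> sc \<Sigma> Lmst \<le> n + 1 \<and>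
          (prefix_closed L \<longrightarrow> sc \<Sigma> Ls \<le> 2 ^ (n - 2) + 1 \<and> sc \<Sigma> Lsms \<le> 2 ^ (n - 2) + 2) \<and>
          (suffix_closed L \<longrightarrow> sc \<Sigma> Ls \<le> n - 1 \<and> sc \<Sigma> Lsms \<le> n) \<and>
          (factor_closed L \<or> subword_closed L \<longrightarrow> sc \<Sigma> Ls \<le> 2 \<and> sc \<Sigma> Lsms \<le> 3))"
proof -
  from assms(1) have H: "finite \<Sigma>" "L \<subseteq> lists \<Sigma>" "regular_lang \<Sigma> L" "closed_lang L"
     "L \<noteq> {}" "L \<noteq> lists \<Sigma>" "distinct (eight_langs \<Sigma> L)"
    unfolding hyp_def by auto
  have fin: "finite (QS \<Sigma> L)" using regular_finite[OF H(3)] .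
  have ps: "prefix_closed L \<or> suffix_closed L" using closed_ps[OF H(4)] .
  have nil: "[] \<in> L" using ps H(5) pc_Nil sfc_Nil by blast
  have KL: "kstar L \<subseteq> lists \<Sigma>" using kstar_lists[OF H(2)] .
  have KneL: "kstar L \<noteq> L"
  proof
    assume e: "kstar L = L"
    have "L \<notin> set (tl (eight_langs \<Sigma> L))" using H(7) unfolding eight_langs_def by simp
    moreover have "kstar L \<in> set (tl (eight_langs \<Sigma> L))" unfolding eight_langs_def by simp
    ultimately show False using e by simp
  qed
  have n2: "n \<ge> 1"
  proof -
    have "L \<in> QS \<Sigma> L" by (rule Nil_QS)
    then have "card (QS \<Sigma> L) > 0" using fin by (auto simp: card_gt_0_iff)
    then show ?thesis using assms(2) unfolding sc_def by simp
  qed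
  have c1: "sc \<Sigma> (compl_lang \<Sigma> L) = n" using sc_compl[OF H(2)] assms(2) by simp
  have c2: "sc \<Sigma> (kstar L) = sc \<Sigma> (compl_lang \<Sigma> (kstar L))" using sc_compl[OF KL] by simp
  have c3: "sc \<Sigma> (kstar (compl_lang \<Sigma> (kstar L))) = sc \<Sigma> (compl_lang \<Sigma> (kstar (compl_lang \<Sigma> (kstar L))))"
    by (rule sym[OF sc_compl[OF kstar_lists[OF compl_lists]]])
  have c4: "sc \<Sigma> (kstar (compl_lang \<Sigma> L)) = sc \<Sigma> (compl_lang \<Sigma> (kstar (compl_lang \<Sigma> L)))"
    by (rule sym[OF sc_compl[OF kstar_lists[OF compl_lists]]])
  have c5: "sc \<Sigma> (kstar (compl_lang \<Sigma> L)) \<le> n + 1"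
    using sc_kstar_compl_le[OF H(2) nil ps fin] assms(2) by simp
  have step: "sc \<Sigma> (kstar (compl_lang \<Sigma> (kstar L))) \<le> sc \<Sigma> (kstar L) + 1"
    if "prefix_closed (kstar L) \<or> suffix_closed (kstar L)" "finite (QS \<Sigma> (kstar L))"
    by (rule sc_kstar_compl_le[OF KL kstar_Nil that])
  have c6: "prefix_closed L \<longrightarrow> sc \<Sigma> (kstar L) \<le> 2 ^ (n - 2) + 1 \<and> sc \<Sigma> (kstar (compl_lang \<Sigma> (kstar L))) \<le> 2 ^ (n - 2) + 2"
  proof
    assume p: "prefix_closed L"
    note pb = prefix_bound[OF H(2) p nil H(6) fin]
    have "prefix_closed (kstar L)" using kstar_prefix[OF p] .
    then have "sc \<Sigma> (kstar (compl_lang \<Sigma> (kstar L))) \<le> sc \<Sigma> (kstar L) + 1" using step pb(2) by blast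
    then show "sc \<Sigma> (kstar L) \<le> 2 ^ (n - 2) + 1 \<and> sc \<Sigma> (kstar (compl_lang \<Sigma> (kstar L))) \<le> 2 ^ (n - 2) + 2"
    proof -
      have "sc \<Sigma> (kstar L) \<le> 2 ^ (n - 2) + 1" using pb(1) assms(2) by simp
      then show ?thesis using \<open>sc \<Sigma> (kstar (compl_lang \<Sigma> (kstar L))) \<le> sc \<Sigma> (kstar L) + 1\<close> by linarith
    qed
  qed
  have c7: "suffix_closed L \<longrightarrow> sc \<Sigma> (kstar L) \<le> n - 1 \<and> sc \<Sigma> (kstar (compl_lang \<Sigma> (kstar L))) \<le> n"
  proof
    assume p: "suffix_closed L"
    note pb = suffix_bound[OF H(2) p nil fin KneL]
    have "suffix_closed (kstar L)" using kstar_suffix[OF p] .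
    then have "sc \<Sigma> (kstar (compl_lang \<Sigma> (kstar L))) \<le> sc \<Sigma> (kstar L) + 1" using step pb(2) by blast
    then show "sc \<Sigma> (kstar L) \<le> n - 1 \<and> sc \<Sigma> (kstar (compl_lang \<Sigma> (kstar L))) \<le> n"
      using pb(1) assms(2) n2 by linarith
  qed
  have c8: "factor_closed L \<or> subword_closed L \<longrightarrow> sc \<Sigma> (kstar L) \<le> 2 \<and> sc \<Sigma> (kstar (compl_lang \<Sigma> (kstar L))) \<le> 3"
  proof
    assume "factor_closed L \<or> subword_closed L"
    then have f: "factor_closed L" unfolding factor_closed_def subword_closed_def
      using sublist_imp_subseq by blast
    note fb = factor_bound[OF H(2) f]
    then have "sc \<Sigma> (kstar (compl_lang \<Sigma> (kstar L))) \<le> sc \<Sigma> (kstar L) + 1" using step by blast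
    then show "sc \<Sigma> (kstar L) \<le> 2 \<and> sc \<Sigma> (kstar (compl_lang \<Sigma> (kstar L))) \<le> 3"
      using fb(1) by linarith
  qed
  show ?thesis unfolding Let_def using c1 c2 c3 c4 c5 c6 c7 c8 by blast
qed


definition run :: "(nat \<Rightarrow> 'a \<Rightarrow> nat) \<Rightarrow> 'a list \<Rightarrow> nat \<Rightarrow> nat" where
  "run \<delta> w q = fold (\<lambda>a q. \<delta> q a) w q"

definition lf :: "'a set \<Rightarrow> (nat \<Rightarrow> 'a \<Rightarrow> nat) \<Rightarrow> nat set \<Rightarrow> nat \<Rightarrow> 'a list set" where
  "lf \<Sigma> \<delta> F q = {x \<in> lists \<Sigma>. run \<delta> x q \<in> F}"

lemma run_Nil[simp]: "run \<delta> [] q = q" by (simp add: run_def)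
lemma run_Cons[simp]: "run \<delta> (a # w) q = run \<delta> w (\<delta> q a)" by (simp add: run_def)
lemma run_append: "run \<delta> (u @ v) q = run \<delta> v (run \<delta> u q)" by (simp add: run_def)

lemma lquot_lf: "w \<in> lists \<Sigma> \<Longrightarrow> lquot w (lf \<Sigma> \<delta> F q) = lf \<Sigma> \<delta> F (run \<delta> w q)"
  by (auto simp: lquot_def lf_def run_append)

lemma lquot_lf1: "a \<in> \<Sigma> \<Longrightarrow> lquot [a] (lf \<Sigma> \<delta> F q) = lf \<Sigma> \<delta> F (\<delta> q a)"
  using lquot_lf[of "[a]" \<Sigma> \<delta> F q] by simp

lemma Nil_lf: "[] \<in> lf \<Sigma> \<delta> F q \<longleftrightarrow> q \<in> F" by (simp add: lf_def)
lemma single_lf: "[a] \<in> lf \<Sigma> \<delta> F q \<longleftrightarrow> a \<in> \<Sigma> \<and> \<delta> q a \<in> F" by (simp add: lf_def)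

lemma lf_lists: "lf \<Sigma> \<delta> F q \<subseteq> lists \<Sigma>" by (auto simp: lf_def)

lemma run_in: "(\<And>q a. q \<in> Q \<Longrightarrow> a \<in> \<Sigma> \<Longrightarrow> \<delta> q a \<in> Q) \<Longrightarrow> w \<in> lists \<Sigma> \<Longrightarrow> q \<in> Q \<Longrightarrow> run \<delta> w q \<in> Q"
  by (induction w arbitrary: q) auto

lemma run_dead: "(\<And>a. \<delta> d a = d) \<Longrightarrow> run \<delta> w d = d"
  by (induction w) auto

lemma regular_lf:
  assumes "finite Q" "0 \<in> Q" "\<And>q a. q \<in> Q \<Longrightarrow> a \<in> \<Sigma> \<Longrightarrow> \<delta> q a \<in> Q" "F \<subseteq> Q"
  shows "regular_lang \<Sigma> (lf \<Sigma> \<delta> F 0)"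
  unfolding regular_lang_def lf_def run_def using assms by blast

lemma sc_dfa:
  assumes "finite Q" "q0 \<in> Q" "\<And>q a. q \<in> Q \<Longrightarrow> a \<in> \<Sigma> \<Longrightarrow> \<delta> q a \<in> Q"
    "\<And>q. q \<in> Q \<Longrightarrow> \<exists>w\<in>lists \<Sigma>. run \<delta> w q0 = q"
    "\<And>p q. p \<in> Q \<Longrightarrow> q \<in> Q \<Longrightarrow> p \<noteq> q \<Longrightarrow> lf \<Sigma> \<delta> F p \<noteq> lf \<Sigma> \<delta> F q"
  shows "sc \<Sigma> (lf \<Sigma> \<delta> F q0) = card Q" "QS \<Sigma> (lf \<Sigma> \<delta> F q0) = lf \<Sigma> \<delta> F ` Q"
proof -
  have cl: "lquot [a] Y \<in> lf \<Sigma> \<delta> F ` Q" if "Y \<in> lf \<Sigma> \<delta> F ` Q" "a \<in> \<Sigma>" for Y a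
    using that assms(3) by (auto simp: lquot_lf1)
  have re: "\<exists>w\<in>lists \<Sigma>. lquot w (lf \<Sigma> \<delta> F q0) = Y" if Yin: "Y \<in> lf \<Sigma> \<delta> F ` Q" for Y
  proof -
    obtain q where "q \<in> Q" "Y = lf \<Sigma> \<delta> F q" using Yin by blast
    then obtain w where "w \<in> lists \<Sigma>" "run \<delta> w q0 = q" using assms(4) by blast
    then have "lquot w (lf \<Sigma> \<delta> F q0) = Y" using \<open>Y = _\<close> lquot_lf[of w \<Sigma> \<delta> F q0] by simp
    then show ?thesis using \<open>w \<in> lists \<Sigma>\<close> by blast
  qed
  have X: "lf \<Sigma> \<delta> F q0 \<in> lf \<Sigma> \<delta> F ` Q" using assms(2) by blast
  have inj: "inj_on (lf \<Sigma> \<delta> F) Q" using assms(5) unfolding inj_on_def by blast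
  show "sc \<Sigma> (lf \<Sigma> \<delta> F q0) = card Q" "QS \<Sigma> (lf \<Sigma> \<delta> F q0) = lf \<Sigma> \<delta> F ` Q"
  proof -
    show q: "QS \<Sigma> (lf \<Sigma> \<delta> F q0) = lf \<Sigma> \<delta> F ` Q" by (rule fam_eq(2)[OF X cl re])
    have "sc \<Sigma> (lf \<Sigma> \<delta> F q0) = card (lf \<Sigma> \<delta> F ` Q)" by (rule fam_eq(1)[OF X cl re])
    then show "sc \<Sigma> (lf \<Sigma> \<delta> F q0) = card Q" using card_image[OF inj] by simp
  qed
qed

lemma prefix_dfa:
  assumes "\<And>q a. q \<in> Q \<Longrightarrow> a \<in> \<Sigma> \<Longrightarrow> \<delta> q a \<in> Q" "q0 \<in> Q" "\<And>a. \<delta> d a = d" "d \<notin> F" "Q - {d} \<subseteq> F"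
  shows "prefix_closed (lf \<Sigma> \<delta> F q0)"
  unfolding prefix_closed_def
proof (intro ballI allI impI)
  fix w u assume w: "w \<in> lf \<Sigma> \<delta> F q0" and "prefix u w"
  then obtain v where v: "w = u @ v" by (auto simp: prefix_def)
  have ul: "u \<in> lists \<Sigma>" using w v by (auto simp: lf_def)
  have "run \<delta> w q0 = run \<delta> v (run \<delta> u q0)" using v by (simp add: run_append)
  moreover have "run \<delta> w q0 \<in> F" using w by (simp add: lf_def)
  ultimately have "run \<delta> u q0 \<noteq> d" using run_dead[of \<delta> d, OF assms(3)] assms(4) by auto
  moreover have "run \<delta> u q0 \<in> Q" using run_in[of Q \<Sigma> \<delta>, OF assms(1) ul assms(2)] .
  ultimately show "u \<in> lf \<Sigma> \<delta> F q0" using ul assms(5) by (auto simp: lf_def)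
qed

lemma eight_distinct:
  assumes L: "L \<subseteq> lists \<Sigma>" "[] \<in> L" "prefix_closed L \<or> suffix_closed L"
    and x: "x \<in> L" "x \<noteq> []" and y: "y \<in> kstar L" "y \<notin> L"
  shows "distinct (eight_langs \<Sigma> L)"
proof -
  have KL: "kstar L \<subseteq> lists \<Sigma>" using kstar_lists[OF L(1)] .
  have Kc: "prefix_closed (kstar L) \<or> suffix_closed (kstar L)" using L(3) kstar_prefix kstar_suffix by blast
  note e1 = kstar_compl[OF L]
  note e2 = kstar_compl[OF KL kstar_Nil Kc]
  have xl: "x \<in> lists \<Sigma>" using x L(1) by blast
  have yl: "y \<in> lists \<Sigma>" using y KL by blast
  have yne: "y \<noteq> []" using y L(2) by auto
  have xK: "x \<in> kstar L" using x kstar_sub by blast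
  define v where "v Z = ([] \<in> Z, x \<in> Z, y \<in> Z)" for Z :: "'a list set"
  have m: "x \<notin> lists \<Sigma> - L" "y \<in> lists \<Sigma> - L" "[] \<notin> lists \<Sigma> - L"
    "x \<notin> lists \<Sigma> - kstar L" "y \<notin> lists \<Sigma> - kstar L" "[] \<notin> lists \<Sigma> - kstar L"
    using x y xl yl L(2) xK by auto
  have v1: "v L = (True, True, False)" using x y L(2) by (simp add: v_def)
  have v2: "v (compl_lang \<Sigma> L) = (False, False, True)" using m by (simp add: v_def compl_lang_def)
  have v3: "v (compl_lang \<Sigma> L \<union> {[]}) = (True, False, True)" using m x(2) by (simp add: v_def compl_lang_def)
  have v4: "v (compl_lang \<Sigma> (compl_lang \<Sigma> L \<union> {[]})) = (False, True, False)"
    using m x(2) xl yl yne by (simp add: v_def compl_lang_def)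
  have v5: "v (kstar L) = (True, True, True)" using xK y by (simp add: v_def)
  have v6: "v (compl_lang \<Sigma> (kstar L)) = (False, False, False)" using m by (simp add: v_def compl_lang_def)
  have v7: "v (compl_lang \<Sigma> (kstar L) \<union> {[]}) = (True, False, False)" using m x(2) yne by (simp add: v_def compl_lang_def)
  have v8: "v (compl_lang \<Sigma> (compl_lang \<Sigma> (kstar L) \<union> {[]})) = (False, True, True)"
    using m x(2) xl yl yne by (simp add: v_def compl_lang_def)
  have "map v (eight_langs \<Sigma> L) = [(True, True, False), (False, False, True), (True, False, True),
     (False, True, False), (True, True, True), (False, False, False), (True, False, False), (False, True, True)]"
    unfolding eight_langs_def e1 e2 list.map v1 v2 v3 v4 v5 v6 v7 v8 by (rule refl)
  then have "distinct (map v (eight_langs \<Sigma> L))" by simp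
  then show ?thesis by (simp only: distinct_map)
qed


definition dP :: "nat \<Rightarrow> nat \<Rightarrow> nat \<Rightarrow> nat" where
  "dP m q a = (if q = 0 then (if a = 0 then 0 else if odd a then (a + 1) div 2 else m + 1)
     else if q \<le> m then (if a = 0 \<or> odd a \<or> a = 2 * q then q else m + 1) else m + 1)"

abbreviation "SP m \<equiv> {0..2 * m}"
abbreviation "lfP m q \<equiv> lf (SP m) (dP m) {0..m} q"
abbreviation "LP m \<equiv> lfP m 0"
abbreviation "KP m \<equiv> kstar (LP m)"

lemma dP_0a[simp]: "dP m q 0 = (if q \<le> m then q else m + 1)" by (simp add: dP_def)
lemma dP_odd0[simp]: "j \<ge> 1 \<Longrightarrow> dP m 0 (2 * j - 1) = j"
  unfolding dP_def by (cases j) (auto)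
lemma dP_odd[simp]: "j \<ge> 1 \<Longrightarrow> q \<ge> 1 \<Longrightarrow> dP m q (2 * j - 1) = (if q \<le> m then q else m + 1)"
  unfolding dP_def by (cases j) auto
lemma dP_odd0'[simp]: "j \<ge> 1 \<Longrightarrow> dP m 0 (2 * j - Suc 0) = j" using dP_odd0 by simp
lemma dP_odd'[simp]: "j \<ge> 1 \<Longrightarrow> q \<ge> 1 \<Longrightarrow> dP m q (2 * j - Suc 0) = (if q \<le> m then q else m + 1)"
  using dP_odd by simp
lemma dP_even0[simp]: "j \<ge> 1 \<Longrightarrow> dP m 0 (2 * j) = m + 1"
  unfolding dP_def by auto
lemma dP_even[simp]: "j \<ge> 1 \<Longrightarrow> q \<ge> 1 \<Longrightarrow> dP m q (2 * j) = (if q \<le> m \<and> q = j then q else m + 1)"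
  unfolding dP_def by auto
lemma dP_dead[simp]: "dP m (m + 1) a = m + 1" by (simp add: dP_def)
lemma dP_dead'[simp]: "dP m (Suc m) a = Suc m" by (simp add: dP_def)

lemma SP_cases:
  fixes a :: nat
  assumes "a \<in> SP m"
  obtains "a = 0" | j where "j \<in> {1..m}" "a = 2 * j - 1" | j where "j \<in> {1..m}" "a = 2 * j"
proof -
  consider "a = 0" | "odd a" | "even a" "a \<noteq> 0" by blast
  then show thesis
  proof cases
    case 2
    then obtain k where "a = 2 * k + 1" by (metis oddE)
    then show thesis using that(2)[of "k + 1"] assms by auto
  next
    case 3
    then obtain k where "a = 2 * k" by blast
    then show thesis using that(3)[of k] assms 3 by auto
  qed (use that in auto)
qed

lemma dP_in: "q \<in> {0..m+1} \<Longrightarrow> a \<in> SP m \<Longrightarrow> dP m q a \<in> {0..m+1}"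
proof -
  assume q: "q \<in> {0..m+1}" and a: "a \<in> SP m"
  have "dP m q a \<le> m + 1"
  proof (cases "q = 0")
    case True
    show ?thesis using a
    proof (rule SP_cases)
      fix j assume "j \<in> {1..m}" "a = 2 * j - 1" then show ?thesis using True by simp
    qed (use True in simp_all)
  next
    case False
    then show ?thesis unfolding dP_def by auto
  qed
  then show ?thesis by simp
qed

lemma lfP_dead: "lfP m (m + 1) = {}"
proof -
  have "\<forall>x. run (dP m) x (m + 1) = m + 1" by (intro allI run_dead) simp
  then show ?thesis by (auto simp: lf_def)
qed

lemma Nil_lfP: "q \<le> m \<Longrightarrow> [] \<in> lfP m q" by (simp add: Nil_lf)

lemma LP_prefix: "prefix_closed (LP m)"
proof (rule prefix_dfa[where Q="{0..m+1}" and d="m+1"])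
  show "\<And>q a. q \<in> {0..m + 1} \<Longrightarrow> a \<in> SP m \<Longrightarrow> dP m q a \<in> {0..m + 1}" by (rule dP_in)
qed auto

lemma run_P_neq:
  assumes "p \<in> {0..m+1}" "q \<in> {0..m+1}" "p \<noteq> q"
  shows "lfP m p \<noteq> lfP m q"
proof -
  have A: "lfP m p \<noteq> lfP m q" if "p \<le> m" "q = m + 1" for p q
  proof -
    have "lfP m q = {}" using that(2) lfP_dead[of m] by simp
    moreover have "[] \<in> lfP m p" using that(1) by (simp add: Nil_lf)
    ultimately show ?thesis by blast
  qed
  have B: "lfP m p \<noteq> lfP m q" if "p \<in> {1..m}" "q \<le> m" "q \<noteq> p" for p q
  proof -
    have "[2 * p] \<in> lfP m p" using that by (simp add: single_lf)
    moreover have "[2 * p] \<notin> lfP m q"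
    proof (cases "q = 0")
      case True then show ?thesis using that dP_even0[of p m] by (simp add: single_lf)
    next
      case False then show ?thesis using that dP_even[of p q m] by (simp add: single_lf)
    qed
    ultimately show ?thesis by blast
  qed
  show ?thesis
  proof (cases "p = m + 1 \<or> q = m + 1")
    case True
    then show ?thesis
    proof
      assume "p = m + 1" then show ?thesis using A[of q p] assms by auto
    next
      assume "q = m + 1" then show ?thesis using A[of p q] assms by auto
    qed
  next
    case False
    then have "p \<le> m" "q \<le> m" using assms by auto
    show ?thesis
    proof (cases "p = 0")
      case True
      then have "q \<in> {1..m}" using \<open>q \<le> m\<close> assms(3) by auto
      then show ?thesis using B[of q p] True \<open>p \<le> m\<close> assms(3) by auto
    next
      case False
      then have "p \<in> {1..m}" using \<open>p \<le> m\<close> by auto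
      then show ?thesis using B[of p q] \<open>q \<le> m\<close> assms(3) by auto
    qed
  qed
qed

lemma sc_LP: assumes m1: "1 \<le> m" shows "sc (SP m) (LP m) = m + 2" and QS_LP: "QS (SP m) (LP m) = lfP m ` {0..m+1}"
proof -
  have reach: "\<exists>w\<in>lists (SP m). run (dP m) w 0 = q" if "q \<in> {0..m+1}" for q
  proof -
    have "q = 0 \<or> q \<in> {1..m} \<or> q = m + 1" using that by auto
    then consider "q = 0" | "q \<in> {1..m}" | "q = m + 1" by blast
    then show ?thesis
    proof cases
      case 1 then show ?thesis by (intro bexI[of _ "[]"]) auto
    next
      case 2 then show ?thesis using dP_odd0[of q m] by (intro bexI[of _ "[2 * q - 1]"]) auto
    next
      case 3
      have "dP m 0 2 = m + 1" using dP_even0[of 1 m] by simp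
      then show ?thesis using 3 m1 by (intro bexI[of _ "[2]"]) auto
    qed
  qed
  note S = sc_dfa[of "{0..m+1}" 0 "SP m" "dP m" "{0..m}", OF _ _ dP_in reach run_P_neq]
  show "sc (SP m) (LP m) = m + 2" using S(1) by simp
  show "QS (SP m) (LP m) = lfP m ` {0..m+1}" using S(2) by simp
qed


lemma lquot_UN: "lquot w (\<Union>i\<in>I. A i) = (\<Union>i\<in>I. lquot w (A i))" by (auto simp: lquot_def)

definition ZP :: "nat \<Rightarrow> nat set \<Rightarrow> nat list set" where
  "ZP m T = lconc (\<Union>q\<in>insert 0 T. lfP m q) (KP m)"

lemma Nil_LP: "[] \<in> LP m" by (simp add: Nil_lf)

lemma ZP_quot:
  assumes "a \<in> SP m"
  shows "lquot [a] (ZP m T) = lconc (\<Union>q\<in>(\<lambda>q. dP m q a) ` insert 0 T. lfP m q) (KP m)"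
proof -
  have n: "[] \<in> (\<Union>q\<in>insert 0 T. lfP m q)" using Nil_LP by blast
  have u: "lquot [a] (\<Union>q\<in>insert 0 T. lfP m q) = (\<Union>q\<in>(\<lambda>q. dP m q a) ` insert 0 T. lfP m q)"
    unfolding lquot_UN using lquot_lf1[OF assms] by auto
  have k: "lquot [a] (KP m) = lconc (lfP m (dP m 0 a)) (KP m)"
    unfolding lquot_kstar lquot_lf1[OF assms] ..
  have s: "lconc (lfP m (dP m 0 a)) (KP m) \<subseteq> lconc (\<Union>q\<in>(\<lambda>q. dP m q a) ` insert 0 T. lfP m q) (KP m)"
    by (rule lconc_mono) blast
  show ?thesis unfolding ZP_def lquot_lconc if_P[OF n] u k using s by blast
qed

lemma ZP_absorb:
  assumes "s \<in> S" "s \<le> m"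
  shows "lconc (\<Union>q\<in>insert 0 S. lfP m q) (KP m) = lconc (\<Union>q\<in>S. lfP m q) (KP m)"
proof -
  have "(\<Union>q\<in>insert 0 S. lfP m q) = LP m \<union> (\<Union>q\<in>S. lfP m q)" by simp
  then have "lconc (\<Union>q\<in>insert 0 S. lfP m q) (KP m) = KP m \<union> lconc (\<Union>q\<in>S. lfP m q) (KP m)"
    using lconc_kstar_eq[OF Nil_LP] by (simp add: lconc_Un1)
  moreover have "KP m \<subseteq> lconc (\<Union>q\<in>S. lfP m q) (KP m)"
    using assms Nil_lfP[of s m] by (intro lconc_Nil_sub) blast
  ultimately show ?thesis by blast
qed

lemma UN_dead: "(\<Union>q\<in>insert (m + 1) X. lfP m q) = (\<Union>q\<in>X. lfP m q)"
  using lfP_dead[of m] by simp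

lemma ZP_quot_cases:
  assumes a: "a \<in> SP m" and T: "T \<subseteq> {1..m}"
  shows "lquot [a] (ZP m T) \<in> insert {} (ZP m ` Pow {1..m})"
proof -
  note Q = ZP_quot[OF a, of T]
  show ?thesis using a
  proof (rule SP_cases)
    assume "a = 0"
    then have "(\<lambda>q. dP m q a) ` insert 0 T = insert 0 T" using T by force
    then have "lquot [a] (ZP m T) = ZP m T" using Q unfolding ZP_def by simp
    moreover have "T \<in> Pow {1..m}" using T by blast
    ultimately show ?thesis by blast
  next
    fix j assume j: "j \<in> {1..m}" "a = 2 * j - 1"
    have "(\<lambda>q. dP m q a) ` insert 0 T = insert j T"
    proof -
      have "dP m 0 a = j" using j by simp
      moreover have "dP m q a = q" if "q \<in> T" for q using that T j by auto
      ultimately show ?thesis by force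
    qed
    then have "lquot [a] (ZP m T) = lconc (\<Union>q\<in>insert j T. lfP m q) (KP m)" using Q by simp
    also have "\<dots> = ZP m (insert j T)" unfolding ZP_def using j by (intro ZP_absorb[symmetric]) auto
    moreover have "insert j T \<in> Pow {1..m}" using j T by blast
    ultimately show ?thesis by blast
  next
    fix j assume j: "j \<in> {1..m}" "a = 2 * j"
    have "(\<lambda>q. dP m q a) ` insert 0 T = insert (m + 1) (T \<inter> {j})"
    proof -
      have "dP m 0 a = m + 1" using j by simp
      moreover have "dP m q a = (if q = j then q else m + 1)" if "q \<in> T" for q using that T j by auto
      ultimately show ?thesis by force
    qed
    then have e: "lquot [a] (ZP m T) = lconc (\<Union>q\<in>T \<inter> {j}. lfP m q) (KP m)" using Q UN_dead by simp
    show ?thesis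
    proof (cases "j \<in> T")
      case True
      then have "T \<inter> {j} = {j}" by auto
      then have "lquot [a] (ZP m T) = lconc (\<Union>q\<in>{j}. lfP m q) (KP m)" using e by simp
      also have "\<dots> = ZP m {j}" unfolding ZP_def using j by (intro ZP_absorb[symmetric]) auto
      moreover have "{j} \<in> Pow {1..m}" using j by blast
      ultimately show ?thesis by blast
    next
      case False
      then have "T \<inter> {j} = {}" by auto
      then show ?thesis using e by simp
    qed
  qed
qed

lemma ZP_empty: "ZP m {} = KP m"
  unfolding ZP_def using lconc_kstar_eq[OF Nil_LP] by simp

lemma ZP_reach:
  assumes "finite T" "T \<subseteq> {1..m}"
  shows "\<exists>w\<in>lists (SP m). lquot w (KP m) = ZP m T"
  using assms
proof (induction T rule: finite_induct)
  case empty
  have "lquot [] (KP m) = ZP m {}" using ZP_empty by simp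
  then show ?case by blast
next
  case (insert j T)
  then obtain w where w: "w \<in> lists (SP m)" "lquot w (KP m) = ZP m T" by auto
  have j: "j \<in> {1..m}" using insert by auto
  define a where "a = 2 * j - 1"
  have a: "a \<in> SP m" using j unfolding a_def by auto
  have "(\<lambda>q. dP m q a) ` insert 0 T = insert j T"
  proof -
    have "dP m 0 a = j" using j unfolding a_def by simp
    moreover have "dP m q a = q" if "q \<in> T" for q using that insert.prems j unfolding a_def by auto
    ultimately show ?thesis by force
  qed
  then have "lquot [a] (ZP m T) = lconc (\<Union>q\<in>insert j T. lfP m q) (KP m)" using ZP_quot[OF a, of T] by simp
  also have "\<dots> = ZP m (insert j T)" unfolding ZP_def using j by (intro ZP_absorb[symmetric]) auto
  finally have "lquot (w @ [a]) (KP m) = ZP m (insert j T)" using w by (simp add: lquot_append)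
  moreover have "w @ [a] \<in> lists (SP m)" using w a by simp
  ultimately show ?case by blast
qed

lemma ZP_mem:
  assumes "j \<in> {1..m}" "T \<subseteq> {1..m}"
  shows "[2 * j] \<in> ZP m T \<longleftrightarrow> j \<in> T"
proof -
  have jS: "2 * j \<in> SP m" using assms by auto
  have nK: "[2 * j] \<notin> KP m" unfolding single_kstar using assms by (simp add: single_lf)
  have "[2 * j] \<in> (\<Union>q\<in>insert 0 T. lfP m q) \<longleftrightarrow> j \<in> T"
  proof
    assume "[2 * j] \<in> (\<Union>q\<in>insert 0 T. lfP m q)"
    then obtain q where q: "q \<in> insert 0 T" "[2 * j] \<in> lfP m q" by blast
    then have "dP m q (2 * j) \<le> m" by (simp add: single_lf)
    then show "j \<in> T" using q(1) assms
      by (cases "q = 0") (auto split: if_splits)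
  next
    assume "j \<in> T"
    then have "[2 * j] \<in> lfP m j" using assms by (simp add: single_lf)
    then show "[2 * j] \<in> (\<Union>q\<in>insert 0 T. lfP m q)" using \<open>j \<in> T\<close> by blast
  qed
  then show ?thesis unfolding ZP_def single_lconc using nK by simp
qed

lemma sc_KP:
  assumes "1 \<le> m"
  shows "sc (SP m) (KP m) = 2 ^ m + 1" "QS (SP m) (KP m) = insert {} (ZP m ` Pow {1..m})"
proof -
  define F where "F = insert {} (ZP m ` Pow {1..m})"
  have "{} \<in> Pow {1..m}" by blast
  then have "ZP m {} \<in> ZP m ` Pow {1..m}" by (rule imageI)
  then have "KP m \<in> ZP m ` Pow {1..m}" by (simp only: ZP_empty)
  then have X: "KP m \<in> F" unfolding F_def by (rule insertI2)
  have cl: "lquot [a] Y \<in> F" if Y: "Y \<in> F" and a: "a \<in> SP m" for Y a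
  proof -
    from Y consider "Y = {}" | T where "T \<in> Pow {1..m}" "Y = ZP m T" unfolding F_def by blast
    then show ?thesis
    proof cases
      case 1 then show ?thesis unfolding F_def by simp
    next
      case 2 then show ?thesis using ZP_quot_cases[OF a, of T] unfolding F_def by blast
    qed
  qed
  have re: "\<exists>w\<in>lists (SP m). lquot w (KP m) = Y" if Y: "Y \<in> F" for Y
  proof -
    from Y consider "Y = {}" | T where "T \<in> Pow {1..m}" "Y = ZP m T" unfolding F_def by blast
    then show ?thesis
    proof cases
      case 1
      have l2: "lquot [2] (KP m) = lconc (lfP m (dP m 0 2)) (KP m)"
        using assms by (simp add: lquot_kstar lquot_lf1)
      have "dP m 0 2 = m + 1" using dP_even0[of 1 m] by simp
      then have "lfP m (dP m 0 2) = {}" using lfP_dead[of m] by simp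
      then have "lquot [2] (KP m) = {}" using l2 by simp
      moreover have "[2] \<in> lists (SP m)" using assms by simp
      ultimately show ?thesis using 1 by blast
    next
      case 2
      then have "T \<subseteq> {1..m}" "finite T" using finite_subset[of T "{1..m}"] by auto
      then show ?thesis using ZP_reach[of T m] 2 by blast
    qed
  qed
  have inj: "inj_on (ZP m) (Pow {1..m})"
  proof (rule inj_onI)
    fix T T' assume T: "T \<in> Pow {1..m}" "T' \<in> Pow {1..m}" "ZP m T = ZP m T'"
    have "j \<in> T \<longleftrightarrow> j \<in> T'" for j
    proof (cases "j \<in> {1..m}")
      case True
      then show ?thesis using T ZP_mem[OF True, of T] ZP_mem[OF True, of T'] by simp
    next
      case False then show ?thesis using T by blast
    qed
    then show "T = T'" by blast
  qed
  have ne: "{} \<notin> ZP m ` Pow {1..m}"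
  proof
    assume "{} \<in> ZP m ` Pow {1..m}"
    then obtain T where "ZP m T = {}" by blast
    moreover have "[] \<in> ZP m T"
    proof -
      have "[] \<in> (\<Union>q\<in>insert 0 T. lfP m q)" using Nil_LP by blast
      then have "[] @ [] \<in> ZP m T" unfolding ZP_def by (rule lconc_memI) simp
      then show ?thesis by simp
    qed
    ultimately show False by simp
  qed
  have fin: "finite (ZP m ` Pow {1..m})" by simp
  have "card F = Suc (card (ZP m ` Pow {1..m}))" unfolding F_def by (rule card_insert_disjoint[OF fin ne])
  also have "card (ZP m ` Pow {1..m}) = 2 ^ m" using card_image[OF inj] by (simp add: card_Pow)
  finally have "card F = 2 ^ m + 1" by simp
  moreover have "sc (SP m) (KP m) = card F" by (rule fam_eq(1)[OF X cl re])
  ultimately show "sc (SP m) (KP m) = 2 ^ m + 1" by simp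
  have "QS (SP m) (KP m) = F" by (rule fam_eq(2)[OF X cl re])
  then show "QS (SP m) (KP m) = insert {} (ZP m ` Pow {1..m})" unfolding F_def .
qed


lemma wit_prefix:
  assumes n: "n \<ge> 4"
  shows "\<exists>(\<Sigma>::nat set) L. hyp \<Sigma> L \<and> prefix_closed L \<and> sc \<Sigma> L = n \<and>
          sc \<Sigma> (kstar L) = 2 ^ (n - 2) + 1 \<and>
          sc \<Sigma> (kstar (compl_lang \<Sigma> (kstar L))) = 2 ^ (n - 2) + 1 + 1 \<and>
          sc \<Sigma> (kstar (compl_lang \<Sigma> L)) = n + 1"
proof -
  define m where "m = n - 2"
  have m2: "m \<ge> 2" and nm: "n = m + 2" using n unfolding m_def by auto
  have LS: "LP m \<subseteq> lists (SP m)" by (rule lf_lists)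
  have KS: "KP m \<subseteq> lists (SP m)" by (rule kstar_lists[OF LS])
  have nilL: "[] \<in> LP m" by (rule Nil_LP)
  have pL: "prefix_closed (LP m)" by (rule LP_prefix)
  have pK: "prefix_closed (KP m)" by (rule kstar_prefix[OF pL])
  have x: "[0] \<in> LP m" by (simp add: single_lf dP_def)
  have xK: "[0] \<in> KP m" using x kstar_sub by blast
  have y1: "[1, 2] \<in> LP m" using m2 by (simp add: lf_def dP_def)
  have y2: "[3, 4] \<in> LP m" using m2 by (simp add: lf_def dP_def)
  have yK: "[1, 2, 3, 4] \<in> KP m"
    using kstar_Cons[OF y1 kstar_Cons[OF y2 kstar_Nil]] by simp
  have yL: "[1, 2, 3, 4] \<notin> LP m" using m2 by (simp add: lf_def dP_def)
  have two: "[2] \<notin> LP m" "[2] \<in> lists (SP m)" using m2 by (simp_all add: single_lf dP_def)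
  have reg: "regular_lang (SP m) (LP m)"
  proof (rule regular_lf[where Q="{0..m+1}"])
    show "\<And>q a. q \<in> {0..m + 1} \<Longrightarrow> a \<in> SP m \<Longrightarrow> dP m q a \<in> {0..m + 1}" by (rule dP_in)
  qed auto
  have hyp: "hyp (SP m) (LP m)"
    unfolding hyp_def closed_lang_def
    using LS reg pL nilL two eight_distinct[OF LS nilL _ x _ yK yL] by auto
  have scL: "sc (SP m) (LP m) = n" using sc_LP[of m] m2 nm by simp
  have scK: "sc (SP m) (KP m) = 2 ^ (n - 2) + 1" using sc_KP[of m] m2 unfolding m_def by simp
  have finL: "finite (QS (SP m) (LP m))" using QS_LP[of m] m2 by simp
  have finK: "finite (QS (SP m) (KP m))" using sc_KP(2)[of m] m2 by simp
  have r0: "[0] \<in> lists (SP m)" by simp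
  have resetL: "lquot [0] (LP m) = LP m" by (simp add: lquot_lf1 dP_def)
  have resetK: "lquot [0] (KP m) = KP m"
    unfolding lquot_kstar resetL by (rule lconc_kstar_eq[OF nilL])
  have e1: "sc (SP m) (kstar (compl_lang (SP m) (LP m))) = n + 1"
    using sc_kstar_compl_eq[OF LS nilL _ finL r0 _ resetL prefix_neq[OF pL x]] pL scL by simp
  have e2: "sc (SP m) (kstar (compl_lang (SP m) (KP m))) = 2 ^ (n - 2) + 1 + 1"
    using sc_kstar_compl_eq[OF KS kstar_Nil _ finK r0 _ resetK prefix_neq[OF pK xK]] pK scK by simp
  show ?thesis using hyp pL scL scK e1 e2 by blast
qed


definition dS :: "nat \<Rightarrow> nat \<Rightarrow> nat \<Rightarrow> nat" where
  "dS m q a = (if q = 0 then (if a = 0 then 0 else m) else if q \<le> m then (if a = 0 then q - 1 else m + 1) else m + 1)"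

abbreviation "SS \<equiv> {0::nat, 1}"
abbreviation "lfS m q \<equiv> lf SS (dS m) {0, 1} q"
abbreviation "LS m \<equiv> lfS m 0"
abbreviation "KS m \<equiv> kstar (LS m)"

lemma dS_in: "q \<in> {0..m+1} \<Longrightarrow> a \<in> SS \<Longrightarrow> dS m q a \<in> {0..m+1}"
  unfolding dS_def by auto

lemma dS_dead[simp]: "dS m (Suc m) a = Suc m" by (simp add: dS_def)

lemma run_deadS: "run (dS m) x (Suc m) = Suc m"
  by (rule run_dead) simp

lemma lfS_dead: "m \<ge> 1 \<Longrightarrow> lfS m (m + 1) = {}"
  using run_deadS[of m] by (auto simp: lf_def)

lemma run_rep0: "q \<le> m \<Longrightarrow> run (dS m) (replicate k 0) q = q - k"
proof (induction k arbitrary: q)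
  case 0 then show ?case by simp
next
  case (Suc k)
  have "dS m q 0 = q - 1" using Suc.prems by (simp add: dS_def)
  then show ?case using Suc by simp
qed

lemma lfS_sub: "q \<in> {0..m+1} \<Longrightarrow> x \<in> lfS m q \<Longrightarrow> m \<ge> 2 \<Longrightarrow> x \<in> LS m"
proof (induction x arbitrary: q)
  case Nil then show ?case by (simp add: lf_def)
next
  case (Cons a x)
  have xl: "x \<in> lists SS" "a \<in> SS" using Cons.prems by (auto simp: lf_def)
  have r: "run (dS m) x (dS m q a) \<in> {0, 1}" using Cons.prems by (simp add: lf_def)
  show ?case
  proof (cases "q = 0")
    case True then show ?thesis using Cons.prems by simp
  next
    case False
    show ?thesis
    proof (cases "q \<le> m \<and> a = 0")
      case True
      then have "dS m q a = q - 1" using False by (simp add: dS_def)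
      then have "x \<in> lfS m (q - 1)" using r xl by (simp add: lf_def)
      then have "x \<in> LS m" using Cons.IH[of "q - 1"] Cons.prems by auto
      moreover have "dS m 0 a = 0" using True by (simp add: dS_def)
      ultimately show ?thesis using xl by (simp add: lf_def)
    next
      case False2: False
      then have "dS m q a = m + 1" using False Cons.prems(1) unfolding dS_def by auto
      then have "run (dS m) x (dS m q a) = m + 1" using run_deadS[of m x] by simp
      then show ?thesis using r Cons.prems(3) by simp
    qed
  qed
qed

lemma LS_suffix: assumes "m \<ge> 2" shows "suffix_closed (LS m)"
  unfolding suffix_closed_def
proof (intro ballI allI impI)
  fix w v assume w: "w \<in> LS m" and "suffix v w"
  then obtain u where u: "w = u @ v" by (auto simp: suffix_def)
  have ul: "u \<in> lists SS" using w u by (auto simp: lf_def)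
  have "v \<in> lquot u (LS m)" using w u by (simp add: lquot_def)
  then have "v \<in> lfS m (run (dS m) u 0)" using lquot_lf[OF ul] by simp
  moreover have "run (dS m) u 0 \<in> {0..m+1}"
  proof -
    have d: "\<And>q a. q \<in> {0..m+1} \<Longrightarrow> a \<in> SS \<Longrightarrow> dS m q a \<in> {0..m+1}" by (rule dS_in)
    show ?thesis using run_in[of "{0..m+1}" SS "dS m" u 0, OF d ul] by simp
  qed
  ultimately show "v \<in> LS m" using lfS_sub assms by blast
qed

definition zS :: "nat \<Rightarrow> nat list" where "zS m = 1 # replicate (m - 1) 0"

lemma zS_in: "m \<ge> 2 \<Longrightarrow> zS m \<in> LS m"
proof -
  assume m: "m \<ge> 2"
  have "run (dS m) (zS m) 0 = run (dS m) (replicate (m - 1) 0) m" by (simp add: zS_def dS_def)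
  also have "\<dots> = 1" using run_rep0[of m m "m - 1"] m by simp
  finally have "run (dS m) (zS m) 0 = 1" .
  moreover have "zS m \<in> lists SS" by (auto simp: zS_def)
  ultimately show ?thesis by (simp add: lf_def)
qed

lemma one_notin: "q \<ge> 1 \<Longrightarrow> m \<ge> 2 \<Longrightarrow> 1 # x \<notin> lfS m q"
proof
  assume q: "q \<ge> 1" and m: "m \<ge> 2" and x: "1 # x \<in> lfS m q"
  have "dS m q 1 = m + 1" using q by (simp add: dS_def)
  then have "run (dS m) (1 # x) q = m + 1" using run_deadS[of m x] by simp
  then show False using x m by (simp add: lf_def)
qed

lemma rep_in: "q \<in> {1..m} \<Longrightarrow> replicate (q - 1) 0 \<in> lfS m q"
  using run_rep0[of q m "q - 1"] by (auto simp: lf_def)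

lemma rep_notin: "p \<in> {1..m} \<Longrightarrow> q \<in> {1..m} \<Longrightarrow> p < q \<Longrightarrow> replicate (p - 1) 0 \<notin> lfS m q"
  using run_rep0[of q m "p - 1"] by (auto simp: lf_def)

lemma lfS_prefix: "q \<in> {1..m} \<Longrightarrow> x \<in> lfS m q \<Longrightarrow> m \<ge> 2 \<Longrightarrow> prefix (replicate (q - 1) 0) x"
proof (induction x arbitrary: q)
  case Nil then show ?case by (simp add: lf_def)
next
  case (Cons a x)
  show ?case
  proof (cases "q = 1")
    case True then show ?thesis by simp
  next
    case False
    have "a = 0" using one_notin[of q m x] Cons.prems by (auto simp: lf_def)
    moreover have "dS m q 0 = q - 1" using Cons.prems(1) False by (simp add: dS_def)
    ultimately have "x \<in> lfS m (q - 1)" using Cons.prems by (simp add: lf_def)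
    moreover have "q - 1 \<in> {1..m}" using Cons.prems(1) False by auto
    ultimately have P: "prefix (replicate (q - 1 - 1) 0) x" using Cons.IH[of "q - 1"] Cons.prems(3) by blast
    have "q \<ge> 2" using False Cons.prems(1) by auto
    define k where "k = q - 2"
    have "q = Suc (Suc k)" using \<open>q \<ge> 2\<close> unfolding k_def by simp
    then show ?thesis using \<open>a = 0\<close> P by simp
  qed
qed

lemma sc_LS: assumes m: "m \<ge> 2" shows "sc SS (LS m) = m + 2" "QS SS (LS m) = lfS m ` {0..m+1}"
proof -
  have reach: "\<exists>w\<in>lists SS. run (dS m) w 0 = q" if "q \<in> {0..m+1}" for q
  proof -
    have "q = 0 \<or> q \<in> {1..m} \<or> q = m + 1" using that by auto
    then consider "q = 0" | "q \<in> {1..m}" | "q = m + 1" by blast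
    then show ?thesis
    proof cases
      case 1 then show ?thesis by (intro bexI[of _ "[]"]) auto
    next
      case 2
      have "run (dS m) (1 # replicate (m - q) 0) 0 = q" using run_rep0[of m m "m - q"] 2 by (simp add: dS_def)
      then show ?thesis by (intro bexI[of _ "1 # replicate (m - q) 0"]) auto
    next
      case 3
      have "run (dS m) [1, 1] 0 = m + 1" using m by (simp add: dS_def)
      then show ?thesis using 3 by (intro bexI[of _ "[1, 1]"]) auto
    qed
  qed
  have neq1: "lfS m p \<noteq> lfS m q" if "p \<in> {0..m+1}" "q \<in> {0..m+1}" "p < q" for p q
  proof (cases "p = 0")
    case True
    have "zS m \<in> lfS m p" using zS_in m True by simp
    moreover have "zS m \<notin> lfS m q" unfolding zS_def using one_notin[of q m] that True m by simp
    ultimately show ?thesis by blast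
  next
    case False
    then have p: "p \<in> {1..m}" using that by auto
    have "replicate (p - 1) 0 \<in> lfS m p" using rep_in[OF p] .
    moreover have "replicate (p - 1) 0 \<notin> lfS m q"
    proof (cases "q = m + 1")
      case True then show ?thesis using lfS_dead[of m] m by simp
    next
      case False
      then have "q \<in> {1..m}" using that by auto
      then show ?thesis using rep_notin[OF p] that by blast
    qed
    ultimately show ?thesis by blast
  qed
  have neq: "lfS m p \<noteq> lfS m q" if "p \<in> {0..m+1}" "q \<in> {0..m+1}" "p \<noteq> q" for p q
  proof (cases "p < q")
    case True then show ?thesis using neq1 that by blast
  next
    case False then have "q < p" using that by auto
    then show ?thesis using neq1[of q p] that by auto
  qed
  note S = sc_dfa[of "{0..m+1}" 0 SS "dS m" "{0, 1}", OF _ _ dS_in reach neq]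
  show "sc SS (LS m) = m + 2" using S(1) by simp
  show "QS SS (LS m) = lfS m ` {0..m+1}" using S(2) by simp
qed


lemma prefix_nth': "prefix a b \<Longrightarrow> i < length a \<Longrightarrow> a ! i = b ! i"
  by (auto simp: prefix_def nth_append)

lemma dS00[simp]: "dS m 0 0 = 0" by (simp add: dS_def)
lemma dS01[simp]: "dS m 0 (Suc 0) = m" by (simp add: dS_def)
lemma dSq0: "1 \<le> q \<Longrightarrow> q \<le> m \<Longrightarrow> dS m q 0 = q - 1" by (simp add: dS_def)
lemma dSq1: "1 \<le> q \<Longrightarrow> dS m q (Suc 0) = m + 1" by (simp add: dS_def)

lemma Nil_LS: "[] \<in> LS m" by (simp add: Nil_lf)

lemma Nil_lfS: "s \<in> {2..m+1} \<Longrightarrow> [] \<notin> lfS m s" by (simp add: Nil_lf)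

lemma lfS1_absorb: "m \<ge> 2 \<Longrightarrow> lconc (lfS m 1) (KS m) = KS m"
proof -
  assume m: "m \<ge> 2"
  have sub: "lfS m 1 \<subseteq> LS m" using lfS_sub[of 1 m] m by auto
  show ?thesis by (rule lconc_absorb[OF _ sub Nil_LS]) (simp add: Nil_lf)
qed

lemma quotK: "a \<in> SS \<Longrightarrow> lquot [a] (KS m) = lconc (lfS m (dS m 0 a)) (KS m)"
  by (simp add: lquot_kstar lquot_lf1)

lemma quotC: "s \<in> {2..m+1} \<Longrightarrow> a \<in> SS \<Longrightarrow>
   lquot [a] (lconc (lfS m s) (KS m)) = lconc (lfS m (dS m s a)) (KS m)"
  using Nil_lfS[of s m] by (simp add: lquot_lconc lquot_lf1)

definition FS :: "nat \<Rightarrow> nat list set set" where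
  "FS m = insert (KS m) ((\<lambda>s. lconc (lfS m s) (KS m)) ` {2..m+1})"

lemma FS_closed:
  assumes m: "m \<ge> 2" and Y: "Y \<in> FS m" and a: "a \<in> SS"
  shows "lquot [a] Y \<in> FS m"
proof -
  have cs: "lconc (lfS m s) (KS m) \<in> FS m" if "s \<in> {1..m+1}" for s
  proof (cases "s = 1")
    case True then show ?thesis using lfS1_absorb[OF m] unfolding FS_def by simp
  next
    case False then have "s \<in> {2..m+1}" using that by auto
    then show ?thesis unfolding FS_def by blast
  qed
  from Y consider "Y = KS m" | s where "s \<in> {2..m+1}" "Y = lconc (lfS m s) (KS m)"
    unfolding FS_def by blast
  then show ?thesis
  proof cases
    case 1
    show ?thesis
    proof (cases "a = 0")
      case True
      then have "lquot [a] Y = KS m" using 1 quotK[OF a] lconc_kstar_eq[OF Nil_LS] by simp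
      then show ?thesis unfolding FS_def by simp
    next
      case False
      then have "a = 1" using a by simp
      then have "lquot [a] Y = lconc (lfS m m) (KS m)" using 1 quotK[OF a] by simp
      then show ?thesis using cs[of m] m by simp
    qed
  next
    case 2
    then have "lquot [a] Y = lconc (lfS m (dS m s a)) (KS m)" using quotC[OF _ a] by simp
    moreover have "dS m s a \<in> {1..m+1}" using 2 a unfolding dS_def by auto
    ultimately show ?thesis using cs by simp
  qed
qed

lemma reachC: "m \<ge> 2 \<Longrightarrow> k \<le> m - 2 \<Longrightarrow> lquot (1 # replicate k 0) (KS m) = lconc (lfS m (m - k)) (KS m)"
proof (induction k)
  case 0 then show ?case using quotK[of 1 m] by simp
next
  case (Suc k)
  have eq: "1 # replicate (Suc k) 0 = (1 # replicate k 0) @ [0]" by (simp add: replicate_append_same)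
  have A: "lquot (1 # replicate (Suc k) 0) (KS m) = lquot [0] (lquot (1 # replicate k 0) (KS m))"
    unfolding eq lquot_append ..
  have B: "lquot (1 # replicate k 0) (KS m) = lconc (lfS m (m - k)) (KS m)" using Suc by simp
  have C: "lquot [0] (lconc (lfS m (m - k)) (KS m)) = lconc (lfS m (dS m (m - k) 0)) (KS m)"
    using Suc.prems by (intro quotC) auto
  have D: "dS m (m - k) 0 = m - Suc k" using Suc.prems by (simp add: dSq0)
  show ?case using A B C D by simp
qed

lemma zS_notC: "m \<ge> 2 \<Longrightarrow> s \<in> {2..m+1} \<Longrightarrow> zS m \<notin> lconc (lfS m s) (KS m)"
proof
  assume m: "m \<ge> 2" and s: "s \<in> {2..m+1}" and z: "zS m \<in> lconc (lfS m s) (KS m)"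
  then obtain x y where xy: "zS m = x @ y" "x \<in> lfS m s" by (auto simp: lconc_def)
  have "x \<noteq> []" using xy Nil_lfS[OF s] by auto
  then obtain x' where "x = 1 # x'" using xy(1) unfolding zS_def by (cases x) auto
  then show False using one_notin[of s m x'] xy s m by auto
qed

definition zp :: "nat \<Rightarrow> nat \<Rightarrow> nat list" where "zp m p = replicate (p - 1) 0 @ zS m"

lemma zp_in: "m \<ge> 2 \<Longrightarrow> p \<in> {2..m} \<Longrightarrow> zp m p \<in> lconc (lfS m p) (KS m)"
  unfolding zp_def using rep_in[of p m] zS_in[of m] kstar_sub
  by (intro lconc_memI) auto

lemma zp_notin:
  assumes m: "m \<ge> 2" and p: "p \<in> {2..m}" and q: "q \<in> {2..m+1}" and pq: "p < q"
  shows "zp m p \<notin> lconc (lfS m q) (KS m)"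
proof
  assume "zp m p \<in> lconc (lfS m q) (KS m)"
  then obtain x y where xy: "zp m p = x @ y" "x \<in> lfS m q" by (auto simp: lconc_def)
  show False
  proof (cases "q = m + 1")
    case True then show False using xy lfS_dead[of m] m by simp
  next
    case False
    then have q': "q \<in> {1..m}" using q by auto
    have "prefix (replicate (q - 1) 0) x" using lfS_prefix[OF q' xy(2) m] .
    then have "prefix (replicate (q - 1) 0) (zp m p)" using xy(1) by (simp add: prefix_def) (metis append.assoc)
    then have "replicate (q - 1) 0 ! (p - 1) = zp m p ! (p - 1)" using pq p by (intro prefix_nth') auto
    moreover have "zp m p ! (p - 1) = 1" unfolding zp_def zS_def by (simp add: nth_append)
    moreover have "p - 1 < q - 1" using pq p by auto
    then have "replicate (q - 1) 0 ! (p - 1) = 0" by simp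
    ultimately show False by (metis zero_neq_one)
  qed
qed

lemma sc_KS:
  assumes m: "m \<ge> 2"
  shows "sc SS (KS m) = m + 1" "QS SS (KS m) = FS m"
proof -
  have X: "KS m \<in> FS m" unfolding FS_def by simp
  have re: "\<exists>w\<in>lists SS. lquot w (KS m) = Y" if Y: "Y \<in> FS m" for Y
  proof -
    from Y consider "Y = KS m" | s where "s \<in> {2..m+1}" "Y = lconc (lfS m s) (KS m)"
      unfolding FS_def by blast
    then show ?thesis
    proof cases
      case 1
      have "lquot [] (KS m) = Y" using 1 by simp
      then show ?thesis by blast
    next
      case 2
      show ?thesis
      proof (cases "s = m + 1")
        case True
        have "lquot [1, 1] (KS m) = lquot [1] (lquot [1] (KS m))" using lquot_append[of "[1]" "[1]" "KS m"] by simp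
        also have "lquot [1] (KS m) = lconc (lfS m m) (KS m)" using reachC[of m 0] m by simp
        also have "lquot [1] (lconc (lfS m m) (KS m)) = lconc (lfS m (dS m m 1)) (KS m)"
          using m by (intro quotC) auto
        also have "dS m m 1 = m + 1" using m dSq1[of m m] by simp
        finally have "lquot [1, 1] (KS m) = Y" using 2 True by simp
        moreover have "[1, 1] \<in> lists SS" by simp
        ultimately show ?thesis by blast
      next
        case False
        then have "m - s \<le> m - 2" "m - (m - s) = s" using 2 by auto
        then have "lquot (1 # replicate (m - s) 0) (KS m) = Y" using reachC[OF m, of "m - s"] 2 by simp
        moreover have "1 # replicate (m - s) 0 \<in> lists SS" by auto
        ultimately show ?thesis by blast
      qed
    qed
  qed
  have inj: "inj_on (\<lambda>s. lconc (lfS m s) (KS m)) {2..m+1}"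
  proof (rule inj_onI)
    fix p q assume pq: "p \<in> {2..m+1}" "q \<in> {2..m+1}" "lconc (lfS m p) (KS m) = lconc (lfS m q) (KS m)"
    show "p = q"
    proof (rule ccontr)
      assume "p \<noteq> q"
      then consider "p < q" | "q < p" by linarith
      then show False
      proof cases
        case 1
        then have p2: "p \<in> {2..m}" using pq by auto
        show False using zp_in[OF m p2] zp_notin[OF m p2 pq(2) 1] pq(3) by simp
      next
        case 2
        then have q2: "q \<in> {2..m}" using pq by auto
        show False using zp_in[OF m q2] zp_notin[OF m q2 pq(1) 2] pq(3) by simp
      qed
    qed
  qed
  have ne: "KS m \<notin> (\<lambda>s. lconc (lfS m s) (KS m)) ` {2..m+1}"
  proof
    assume "KS m \<in> (\<lambda>s. lconc (lfS m s) (KS m)) ` {2..m+1}"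
    then obtain s where s: "s \<in> {2..m+1}" "KS m = lconc (lfS m s) (KS m)" by blast
    have "zS m \<in> KS m" using zS_in[OF m] kstar_sub by blast
    then show False using zS_notC[OF m s(1)] s(2) by simp
  qed
  have fin: "finite ((\<lambda>s. lconc (lfS m s) (KS m)) ` {2..m+1})" by simp
  have "card (FS m) = Suc (card ((\<lambda>s. lconc (lfS m s) (KS m)) ` {2..m+1}))"
    unfolding FS_def by (rule card_insert_disjoint[OF fin ne])
  also have "card ((\<lambda>s. lconc (lfS m s) (KS m)) ` {2..m+1}) = m" using card_image[OF inj] by simp
  finally have c: "card (FS m) = m + 1" by simp
  have "sc SS (KS m) = card (FS m)" by (rule fam_eq(1)[OF X FS_closed[OF m] re])
  then show "sc SS (KS m) = m + 1" using c by simp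
  show "QS SS (KS m) = FS m" by (rule fam_eq(2)[OF X FS_closed[OF m] re])
qed


lemma run_zS: "m \<ge> 2 \<Longrightarrow> run (dS m) (zS m) 0 = 1"
proof -
  assume m: "m \<ge> 2"
  have "run (dS m) (zS m) 0 = run (dS m) (replicate (m - 1) 0) m" by (simp add: zS_def)
  also have "\<dots> = 1" using run_rep0[of m m "m - 1"] m by simp
  finally show ?thesis .
qed

lemma wit_suffix:
  assumes n: "n \<ge> 4"
  shows "\<exists>(\<Sigma>::nat set) L. hyp \<Sigma> L \<and> suffix_closed L \<and> sc \<Sigma> L = n \<and>
          sc \<Sigma> (kstar L) = n - 1 \<and>
          sc \<Sigma> (kstar (compl_lang \<Sigma> (kstar L))) = n - 1 + 1 \<and>
          sc \<Sigma> (kstar (compl_lang \<Sigma> L)) = n + 1"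
proof -
  define m where "m = n - 2"
  have m: "m \<ge> 2" and nm: "n = m + 2" using n unfolding m_def by auto
  have LS': "LS m \<subseteq> lists SS" by (rule lf_lists)
  have KS': "KS m \<subseteq> lists SS" by (rule kstar_lists[OF LS'])
  have nilL: "[] \<in> LS m" by (rule Nil_LS)
  have sL: "suffix_closed (LS m)" by (rule LS_suffix[OF m])
  have sK: "suffix_closed (KS m)" by (rule kstar_suffix[OF sL])
  have x: "[0] \<in> LS m" by (simp add: single_lf)
  have z: "zS m \<in> LS m" by (rule zS_in[OF m])
  have zK: "zS m \<in> KS m" using z kstar_sub by blast
  have zne: "zS m \<noteq> []" by (simp add: zS_def)
  have yK: "zS m @ zS m \<in> KS m" using kstar_Cons[OF z zK] .
  have yL: "zS m @ zS m \<notin> LS m"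
  proof -
    have "run (dS m) (zS m @ zS m) 0 = run (dS m) (zS m) 1" by (simp add: run_append run_zS[OF m])
    also have "\<dots> = run (dS m) (replicate (m - 1) 0) (m + 1)" using dSq1[of 1 m] by (simp add: zS_def)
    also have "\<dots> = m + 1" using run_deadS[of m] by simp
    finally show ?thesis using m by (simp add: lf_def)
  qed
  have one: "[1] \<notin> LS m" "[1] \<in> lists SS" using m by (simp_all add: single_lf)
  have reg: "regular_lang SS (LS m)"
  proof (rule regular_lf[where Q="{0..m+1}"])
    show "\<And>q a. q \<in> {0..m + 1} \<Longrightarrow> a \<in> SS \<Longrightarrow> dS m q a \<in> {0..m + 1}" by (rule dS_in)
  qed auto
  have dist: "distinct (eight_langs SS (LS m))"
    using eight_distinct[OF LS' nilL _ x _ yK yL] sL by simp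
  have ne1: "LS m \<noteq> {}" using nilL by blast
  have ne2: "LS m \<noteq> lists SS" using one by blast
  have hyp: "hyp SS (LS m)"
    unfolding hyp_def closed_lang_def
    using LS' reg sL ne1 ne2 dist by simp
  have scL: "sc SS (LS m) = n" using sc_LS(1)[OF m] nm by simp
  have scK: "sc SS (KS m) = n - 1" using sc_KS(1)[OF m] nm by simp
  have finL: "finite (QS SS (LS m))" using sc_LS(2)[OF m] by simp
  have finK: "finite (QS SS (KS m))" using sc_KS(2)[OF m] by (simp add: FS_def)
  have r0: "[0] \<in> lists SS" by simp
  have resetL: "lquot [0] (LS m) = LS m" by (simp add: lquot_lf1)
  have resetK: "lquot [0] (KS m) = KS m" using quotK[of 0 m] lconc_kstar_eq[OF nilL] by simp
  have neqL: "lquot w (LS m) \<noteq> LS m - {[]}" if "w \<in> lists SS" "w \<noteq> []" for w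
  proof -
    have q: "run (dS m) w 0 \<in> {0..m+1}"
    proof -
      have d: "\<And>q a. q \<in> {0..m+1} \<Longrightarrow> a \<in> SS \<Longrightarrow> dS m q a \<in> {0..m+1}" by (rule dS_in)
      show ?thesis using run_in[of "{0..m+1}" SS "dS m" w 0, OF d that(1)] by simp
    qed
    have e: "lquot w (LS m) = lfS m (run (dS m) w 0)" by (rule lquot_lf[OF that(1)])
    show ?thesis
    proof (cases "run (dS m) w 0 \<in> {0, 1}")
      case True
      then have "[] \<in> lquot w (LS m)" unfolding e by (simp add: Nil_lf)
      then show ?thesis by blast
    next
      case False
      then have "run (dS m) w 0 \<ge> 1" by auto
      then have "zS m \<notin> lquot w (LS m)" unfolding e zS_def using one_notin[OF _ m] by blast
      moreover have "zS m \<in> LS m - {[]}" using z zne by simp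
      ultimately show ?thesis by blast
    qed
  qed
  have neqK: "lquot w (KS m) \<noteq> KS m - {[]}" if "w \<in> lists SS" "w \<noteq> []" for w
  proof -
    have "lquot w (KS m) \<in> FS m" using sc_KS(2)[OF m] that(1) by blast
    then consider "lquot w (KS m) = KS m" | s where "s \<in> {2..m+1}" "lquot w (KS m) = lconc (lfS m s) (KS m)"
      unfolding FS_def by blast
    then show ?thesis
    proof cases
      case 1
      then have "[] \<in> lquot w (KS m)" by simp
      then show ?thesis by blast
    next
      case 2
      then have "zS m \<notin> lquot w (KS m)" using zS_notC[OF m] by simp
      moreover have "zS m \<in> KS m - {[]}" using zK zne by simp
      ultimately show ?thesis by blast
    qed
  qed
  have e1: "sc SS (kstar (compl_lang SS (LS m))) = n + 1"
    using sc_kstar_compl_eq[OF LS' nilL _ finL r0 _ resetL neqL] sL scL by simp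
  have e2: "sc SS (kstar (compl_lang SS (KS m))) = n - 1 + 1"
    using sc_kstar_compl_eq[OF KS' kstar_Nil _ finK r0 _ resetK neqK] sK scK by simp
  show ?thesis using hyp sL scL scK e1 e2 by blast
qed


definition dW :: "nat \<Rightarrow> nat \<Rightarrow> nat \<Rightarrow> nat" where
  "dW k q a = (if a = 0 then q else if a = 1 then min (q + 1) k else k)"

abbreviation "SW \<equiv> {0::nat, 1, 2}"
abbreviation "lfW k q \<equiv> lf SW (dW k) {0..<k} q"
abbreviation "LW k \<equiv> lfW k 0"

definition cnt :: "nat list \<Rightarrow> nat" where "cnt x = length (filter (\<lambda>a. a = 1) x)"

lemma run_W: "x \<in> lists SW \<Longrightarrow> q \<le> k \<Longrightarrow>
  run (dW k) x q = (if set x \<subseteq> {0, 1} then min (q + cnt x) k else k)"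
proof (induction x arbitrary: q)
  case Nil then show ?case by (simp add: cnt_def)
next
  case (Cons a x)
  have xl: "x \<in> lists SW" "a \<in> SW" using Cons.prems by auto
  consider "a = 0" | "a = 1" | "a = 2" using xl(2) by blast
  then show ?case
  proof cases
    case 1 then show ?thesis using Cons.IH[OF xl(1) Cons.prems(2)] by (simp add: dW_def cnt_def)
  next
    case 2
    have "min (q + 1) k \<le> k" by simp
    then show ?thesis using Cons.IH[OF xl(1), of "min (q + 1) k"] 2 by (auto simp: dW_def cnt_def)
  next
    case 3
    have "run (dW k) (a # x) q = run (dW k) x k" using 3 by (simp add: dW_def)
    also have "\<dots> = k" using Cons.IH[OF xl(1), of k] by simp
    finally show ?thesis using 3 by simp
  qed
qed

lemma lfW_eq: "q \<le> k \<Longrightarrow> lfW k q = {x \<in> lists SW. set x \<subseteq> {0, 1} \<and> q + cnt x < k}"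
proof (intro equalityI subsetI)
  fix x assume q: "q \<le> k" and x: "x \<in> lfW k q"
  then have xl: "x \<in> lists SW" by (simp add: lf_def)
  note r = run_W[OF xl q]
  have "run (dW k) x q \<in> {0..<k}" using x by (simp add: lf_def)
  then have "(if set x \<subseteq> {0, 1} then min (q + cnt x) k else k) < k" unfolding r by simp
  then show "x \<in> {x \<in> lists SW. set x \<subseteq> {0, 1} \<and> q + cnt x < k}"
    using xl by (auto split: if_splits)
next
  fix x assume q: "q \<le> k" and x: "x \<in> {x \<in> lists SW. set x \<subseteq> {0, 1} \<and> q + cnt x < k}"
  then have xl: "x \<in> lists SW" by simp
  note r = run_W[OF xl q]
  have "run (dW k) x q \<in> {0..<k}" unfolding r using x by auto
  then show "x \<in> lfW k q" using xl by (simp add: lf_def)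
qed

lemma prefix_lists: "prefix_closed (lists A)"
  unfolding prefix_closed_def prefix_def by auto

lemma cnt_rep: "cnt (replicate j 1) = j" by (simp add: cnt_def)
lemma cnt_rep'[simp]: "cnt (replicate j (Suc 0)) = j" by (simp add: cnt_def)

lemma dW_in: "q \<in> {0..k} \<Longrightarrow> a \<in> SW \<Longrightarrow> dW k q a \<in> {0..k}"
  by (auto simp: dW_def)

lemma LW_subword: "subword_closed (LW k)"
  unfolding subword_closed_def
proof (intro ballI allI impI)
  fix w u assume w: "w \<in> LW k" and su: "subseq u w"
  have wL: "w \<in> lists SW" "set w \<subseteq> {0, 1}" "cnt w < k" using w lfW_eq[of 0 k] by auto
  have "set u \<subseteq> set w"
  proof
    fix x assume "x \<in> set u"
    then obtain y where "y \<in> set w" "x = y" using list_emb_set[OF su] by metis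
    then show "x \<in> set w" by simp
  qed
  moreover have "cnt u \<le> cnt w"
    unfolding cnt_def using list_emb_length[OF subseq_filter[OF su]] .
  ultimately show "u \<in> LW k" using wL lfW_eq[of 0 k] by auto
qed

lemma sc_LW:
  assumes k: "k \<ge> 1"
  shows "sc SW (LW k) = k + 1" "QS SW (LW k) = lfW k ` {0..k}"
proof -
  have reach: "\<exists>w\<in>lists SW. run (dW k) w 0 = q" if "q \<in> {0..k}" for q
  proof -
    have rl: "replicate q 1 \<in> lists SW" by auto
    have "run (dW k) (replicate q 1) 0 = q" using that run_W[OF rl, of 0 k] by (simp add: set_replicate_conv_if)
    moreover note rl
    ultimately show ?thesis by blast
  qed
  have neq1: "lfW k p \<noteq> lfW k q" if "p \<in> {0..k}" "q \<in> {0..k}" "p < q" for p q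
  proof -
    have pk: "p \<le> k" "q \<le> k" using that by auto
    have "replicate (k - 1 - p) 1 \<in> lfW k p" unfolding lfW_eq[OF pk(1)] using that by (auto simp: cnt_rep)
    moreover have "replicate (k - 1 - p) 1 \<notin> lfW k q" unfolding lfW_eq[OF pk(2)] using that by (auto simp: cnt_rep)
    ultimately show ?thesis by blast
  qed
  have neq: "lfW k p \<noteq> lfW k q" if "p \<in> {0..k}" "q \<in> {0..k}" "p \<noteq> q" for p q
  proof (cases "p < q")
    case True then show ?thesis using neq1 that by blast
  next
    case False then have "q < p" using that by auto
    then show ?thesis using neq1[of q p] that by auto
  qed
  note S = sc_dfa[of "{0..k}" 0 SW "dW k" "{0..<k}", OF _ _ dW_in reach neq]
  show "sc SW (LW k) = k + 1" using S(1) by simp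
  show "QS SW (LW k) = lfW k ` {0..k}" using S(2) by simp
qed

lemma KW_eq: assumes k: "k \<ge> 2" shows "kstar (LW k) = lists {0, 1}"
proof
  show "kstar (LW k) \<subseteq> lists {0, 1}"
  proof (rule kstar_lists, rule subsetI)
    fix x assume "x \<in> LW k"
    then have "set x \<subseteq> {0, 1}" unfolding lfW_eq[OF le0] by blast
    then show "x \<in> lists {0, 1}" by (simp add: in_lists_conv_set subset_iff)
  qed
  have "w \<in> lists {0, 1} \<longrightarrow> w \<in> kstar (LW k)" for w :: "nat list"
  proof (induction w)
    case Nil then show ?case by simp
  next
    case (Cons a w)
    show ?case
    proof
      assume "a # w \<in> lists {0, 1}"
      then have a: "a = 0 \<or> a = 1" "w \<in> lists {0, 1}" by auto
      have "[a] \<in> LW k" using a(1) k by (elim disjE) (simp_all add: single_lf dW_def)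
      moreover have "w \<in> kstar (LW k)" using Cons.IH a(2) by blast
      ultimately have "[a] @ w \<in> kstar (LW k)" by (rule kstar_Cons)
      then show "a # w \<in> kstar (LW k)" by simp
    qed
  qed
  then show "lists {0, 1} \<subseteq> kstar (LW k)" by blast
qed

lemma sc_lists01: "sc SW (lists {0, 1}) = 2" "QS SW (lists {0, 1}) = {lists {0, 1}, {}}"
proof -
  define F where "F = {lists {0::nat, 1}, {}}"
  have X: "lists {0, 1} \<in> F" unfolding F_def by simp
  have cl: "lquot [a] Y \<in> F" if "Y \<in> F" "a \<in> SW" for Y a
    using that unfolding F_def insert_iff empty_iff by (elim disjE) (simp_all add: lquot_lists_eq)
  have re: "\<exists>w\<in>lists SW. lquot w (lists {0, 1}) = Y" if Y: "Y \<in> F" for Y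
  proof -
    have r1: "lquot [] (lists {0::nat, 1}) = lists {0, 1}" by simp
    have r2: "lquot [2] (lists {0::nat, 1}) = {}" by (simp add: lquot_lists_eq)
    have l1: "[] \<in> lists SW" and l2: "[2] \<in> lists SW" by simp_all
    from Y have "Y = lists {0, 1} \<or> Y = {}" unfolding F_def by simp
    then show ?thesis
    proof
      assume "Y = lists {0, 1}" then show ?thesis using r1 l1 by blast
    next
      assume "Y = {}" then show ?thesis using r2 l2 by blast
    qed
  qed
  have "lists {0::nat, 1} \<noteq> {}" using lists.Nil by blast
  then have "card F = 2" unfolding F_def by simp
  then show "sc SW (lists {0, 1}) = 2" using fam_eq(1)[OF X cl re] by simp
  show "QS SW (lists {0, 1}) = {lists {0, 1}, {}}" using fam_eq(2)[OF X cl re] unfolding F_def .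
qed

lemma wit_subword:
  assumes n: "n \<ge> 4"
  shows "\<exists>(\<Sigma>::nat set) L. hyp \<Sigma> L \<and> subword_closed L \<and> sc \<Sigma> L = n \<and>
          sc \<Sigma> (kstar L) = 2 \<and>
          sc \<Sigma> (kstar (compl_lang \<Sigma> (kstar L))) = 2 + 1 \<and>
          sc \<Sigma> (kstar (compl_lang \<Sigma> L)) = n + 1"
proof -
  define k where "k = n - 1"
  have k: "k \<ge> 3" and nk: "n = k + 1" using n unfolding k_def by auto
  have L': "LW k \<subseteq> lists SW" by (rule lf_lists)
  have K: "kstar (LW k) = lists {0, 1}" using KW_eq k by simp
  have K': "lists {0::nat, 1} \<subseteq> lists SW" by auto
  have nilL: "[] \<in> LW k" by (simp add: Nil_lf) (use k in simp)
  have sL: "subword_closed (LW k)" by (rule LW_subword)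
  have pL: "prefix_closed (LW k)" using sL unfolding subword_closed_def prefix_closed_def
    using prefix_imp_subseq by blast
  have pK: "prefix_closed (lists {0::nat, 1})" by (rule prefix_lists)
  have x: "[0] \<in> LW k" using k by (simp add: single_lf dW_def)
  have yK: "replicate k 1 \<in> kstar (LW k)" unfolding K by auto
  have yL: "replicate k 1 \<notin> LW k" unfolding lfW_eq[OF le0] by (simp add: cnt_rep)
  have two: "[2] \<notin> LW k" "[2] \<in> lists SW" unfolding lfW_eq[OF le0] by simp_all
  have reg: "regular_lang SW (LW k)"
  proof (rule regular_lf[where Q="{0..k}"])
    show "\<And>q a. q \<in> {0..k} \<Longrightarrow> a \<in> SW \<Longrightarrow> dW k q a \<in> {0..k}" by (rule dW_in)
  qed auto
  have dist: "distinct (eight_langs SW (LW k))"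
    using eight_distinct[OF L' nilL _ x _ yK yL] pL by simp
  have ne1: "LW k \<noteq> {}" using nilL by blast
  have ne2: "LW k \<noteq> lists SW" using two by blast
  have hyp: "hyp SW (LW k)"
    unfolding hyp_def closed_lang_def using L' reg sL ne1 ne2 dist by simp
  have scL: "sc SW (LW k) = n" using sc_LW(1)[of k] k nk by simp
  have scK: "sc SW (kstar (LW k)) = 2" unfolding K by (rule sc_lists01(1))
  have finL: "finite (QS SW (LW k))" using sc_LW(2)[of k] k by simp
  have finK: "finite (QS SW (lists {0::nat, 1}))" using sc_lists01(2) by simp
  have r0: "[0] \<in> lists SW" by simp
  have resetL: "lquot [0] (LW k) = LW k" by (simp add: lquot_lf1 dW_def)
  have resetK: "lquot [0] (lists {0::nat, 1}) = lists {0, 1}" by (simp add: lquot_lists_eq)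
  have x0: "[0] \<in> lists {0::nat, 1}" by simp
  have e1: "sc SW (kstar (compl_lang SW (LW k))) = n + 1"
    using sc_kstar_compl_eq[OF L' nilL _ finL r0 _ resetL prefix_neq[OF pL x]] pL scL by simp
  have e2: "sc SW (kstar (compl_lang SW (lists {0, 1}))) = 2 + 1"
    using sc_kstar_compl_eq[OF K' lists.Nil _ finK r0 _ resetK prefix_neq[OF pK x0]] pK sc_lists01(1) by simp
  have e2': "sc SW (kstar (compl_lang SW (kstar (LW k)))) = 2 + 1" using e2 K by simp
  show ?thesis using hyp sL scL scK e1 e2' by blast
qed

theorem theorem7:
  shows
  "(\<forall>(\<Sigma>::'a set) L n. hyp \<Sigma> L \<and> sc \<Sigma> L = n \<longrightarrow>
      (let Lm = compl_lang \<Sigma> L; Lmst = kstar Lm; Lmstm = compl_lang \<Sigma> Lmst;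
           Ls = kstar L; Lsm = compl_lang \<Sigma> Ls; Lsms = kstar Lsm; Lsmsm = compl_lang \<Sigma> Lsms
       in sc \<Sigma> Lm = n \<and>
          sc \<Sigma> Ls = sc \<Sigma> Lsm \<and>
          sc \<Sigma> Lsms = sc \<Sigma> Lsmsm \<and>
          sc \<Sigma> Lmst = sc \<Sigma> Lmstm \<and> sc \<Sigma> Lmst \<le> n + 1 \<and>
          (prefix_closed L \<longrightarrow> sc \<Sigma> Ls \<le> 2 ^ (n - 2) + 1 \<and> sc \<Sigma> Lsms \<le> 2 ^ (n - 2) + 2) \<and>
          (suffix_closed L \<longrightarrow> sc \<Sigma> Ls \<le> n - 1 \<and> sc \<Sigma> Lsms \<le> n) \<and>
          (factor_closed L \<or> subword_closed L \<longrightarrow> sc \<Sigma> Ls \<le> 2 \<and> sc \<Sigma> Lsms \<le> 3)))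
   \<and>
   (\<forall>cls \<in> {(prefix_closed, \<lambda>n::nat. 2 ^ (n - 2) + 1), (suffix_closed, \<lambda>n. n - 1),
              (subword_closed, \<lambda>n. 2)}.
      \<exists>N. \<forall>n\<ge>N. \<exists>(\<Sigma>::nat set) L. hyp \<Sigma> L \<and> fst cls L \<and> sc \<Sigma> L = n \<and>
          sc \<Sigma> (kstar L) = snd cls n \<and>
          sc \<Sigma> (kstar (compl_lang \<Sigma> (kstar L))) = snd cls n + 1 \<and>
          sc \<Sigma> (kstar (compl_lang \<Sigma> L)) = n + 1)"
  proof (rule conjI)
  show "\<forall>(\<Sigma>::'a set) L n. hyp \<Sigma> L \<and> sc \<Sigma> L = n \<longrightarrow>
      (let Lm = compl_lang \<Sigma> L; Lmst = kstar Lm; Lmstm = compl_lang \<Sigma> Lmst;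
           Ls = kstar L; Lsm = compl_lang \<Sigma> Ls; Lsms = kstar Lsm; Lsmsm = compl_lang \<Sigma> Lsms
       in sc \<Sigma> Lm = n \<and>
          sc \<Sigma> Ls = sc \<Sigma> Lsm \<and>
          sc \<Sigma> Lsms = sc \<Sigma> Lsmsm \<and>
          sc \<Sigma> Lmst = sc \<Sigma> Lmstm \<and> sc \<Sigma> Lmst \<le> n + 1 \<and>
          (prefix_closed L \<longrightarrow> sc \<Sigma> Ls \<le> 2 ^ (n - 2) + 1 \<and> sc \<Sigma> Lsms \<le> 2 ^ (n - 2) + 2) \<and>
          (suffix_closed L \<longrightarrow> sc \<Sigma> Ls \<le> n - 1 \<and> sc \<Sigma> Lsms \<le> n) \<and>
          (factor_closed L \<or> subword_closed L \<longrightarrow> sc \<Sigma> Ls \<le> 2 \<and> sc \<Sigma> Lsms \<le> 3))"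
  proof (intro allI impI)
    fix \<Sigma> :: "'a set" and L n assume "hyp \<Sigma> L \<and> sc \<Sigma> L = n"
    then show "let Lm = compl_lang \<Sigma> L; Lmst = kstar Lm; Lmstm = compl_lang \<Sigma> Lmst;
           Ls = kstar L; Lsm = compl_lang \<Sigma> Ls; Lsms = kstar Lsm; Lsmsm = compl_lang \<Sigma> Lsms
       in sc \<Sigma> Lm = n \<and>
          sc \<Sigma> Ls = sc \<Sigma> Lsm \<and>
          sc \<Sigma> Lsms = sc \<Sigma> Lsmsm \<and>
          sc \<Sigma> Lmst = sc \<Sigma> Lmstm \<and> sc \<Sigma> Lmst \<le> n + 1 \<and>
          (prefix_closed L \<longrightarrow> sc \<Sigma> Ls \<le> 2 ^ (n - 2) + 1 \<and> sc \<Sigma> Lsms \<le> 2 ^ (n - 2) + 2) \<and>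
          (suffix_closed L \<longrightarrow> sc \<Sigma> Ls \<le> n - 1 \<and> sc \<Sigma> Lsms \<le> n) \<and>
          (factor_closed L \<or> subword_closed L \<longrightarrow> sc \<Sigma> Ls \<le> 2 \<and> sc \<Sigma> Lsms \<le> 3)"
      using part1 by blast
  qed
next
  show "\<forall>cls \<in> {(prefix_closed, \<lambda>n::nat. 2 ^ (n - 2) + 1), (suffix_closed, \<lambda>n. n - 1),
              (subword_closed, \<lambda>n. 2)}.
      \<exists>N. \<forall>n\<ge>N. \<exists>(\<Sigma>::nat set) L. hyp \<Sigma> L \<and> fst cls L \<and> sc \<Sigma> L = n \<and>
          sc \<Sigma> (kstar L) = snd cls n \<and>
          sc \<Sigma> (kstar (compl_lang \<Sigma> (kstar L))) = snd cls n + 1 \<and>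
          sc \<Sigma> (kstar (compl_lang \<Sigma> L)) = n + 1"
  proof (intro ballI)
    fix cls :: "(nat list set \<Rightarrow> bool) \<times> (nat \<Rightarrow> nat)"
    assume "cls \<in> {(prefix_closed, \<lambda>n::nat. 2 ^ (n - 2) + 1), (suffix_closed, \<lambda>n. n - 1),
              (subword_closed, \<lambda>n. 2)}"
    then consider "cls = (prefix_closed, \<lambda>n::nat. 2 ^ (n - 2) + 1)" | "cls = (suffix_closed, \<lambda>n. n - 1)"
       | "cls = (subword_closed, \<lambda>n. 2)" by blast
    then show "\<exists>N. \<forall>n\<ge>N. \<exists>(\<Sigma>::nat set) L. hyp \<Sigma> L \<and> fst cls L \<and> sc \<Sigma> L = n \<and>
          sc \<Sigma> (kstar L) = snd cls n \<and>
          sc \<Sigma> (kstar (compl_lang \<Sigma> (kstar L))) = snd cls n + 1 \<and>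
          sc \<Sigma> (kstar (compl_lang \<Sigma> L)) = n + 1"
    proof cases
      case 1
      show ?thesis unfolding 1 fst_conv snd_conv by (intro exI[of _ 4] allI impI wit_prefix)
    next
      case 2
      show ?thesis unfolding 2 fst_conv snd_conv by (intro exI[of _ 4] allI impI wit_suffix)
    next
      case 3
      show ?thesis unfolding 3 fst_conv snd_conv by (intro exI[of _ 4] allI impI wit_subword)
    qed
  qed
qed

end
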